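(* Let $m\ge2$, $\ell,r_1,\dots,r_m\ge1$ be integers, $\ell\le k<m\ell$, $n=\sum_{i=1}^m(\ell+r_i)$, and let $$M^*=M(k-1;\ell+r_1,\dots,\ell+r_{m-1},\ell+r_m-1;\ell,\dots,\ell,\ell-1).$$ If $q$ is a prime power with $q>M^*$, then there exists an $[n,k,\ell;r_1,\dots,r_m]$-PMDS code over $\mathbb{F}_q$.
   Context: For positive integers $n_1,\dots,n_m$ with $n=\sum_i n_i$, nonnegative integers $f_1,\dots,f_m$ and an integer $k\ge0$, set $N_0=0$, $N_i=\sum_{j\le i}n_j$, $J_i=\{N_{i-1}+1,\dots,N_i\}$ for $i=1,\dots,m$, and let $M(k;n_1,\dots,n_m;f_1,\dots,f_m)$ be the number of subsets $I\subseteq\{1,\dots,n\}$ with $|I|=k$ and $|I\cap J_i|\le f_i$ for all $i$. An $[n,k]$-MDS code is a linear code of length $n$, dimension $k$, minimum Hamming distance $n-k+1$. PMDS codes: for positive integers $\ell,m,r_1,\dots,r_m$, $n=\sum_i(r_i+\ell)$, a linear code $C\subseteq\mathbb{F}^n$ of dimension $k<n$ with generator matrix $G=(B_1\mid\dots\mid B_m)$, $B_i\in\mathbb{F}^{k\times(r_i+\ell)}$, is an $[n,k,\ell;r_1,\dots,r_m]$-PMDS code if (i) each row space of $B_i$ is an $[r_i+\ell,\ell]$-MDS code, and (ii) for any choice of $r_i$ erased coordinates in block $i$ for every $i$, puncturing $C$ at them gives an $[m\ell,k]$-MDS code. *)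

theory Defs
  imports Complex_Main "HOL-Library.Function_Algebras"
begin

(* Vectors of length n over a field F are modelled as functions nat => F,
   coordinates indexed by a finite coordinate set S (here subsets of {1..n}),
   vanishing outside S. *)

definition sc :: "'a::field \<Rightarrow> (nat \<Rightarrow> 'a) \<Rightarrow> (nat \<Rightarrow> 'a)" where
  "sc c v = (\<lambda>j. c * v j)"

lemma vector_space_sc: "vector_space (sc :: 'a::field \<Rightarrow> _)"
  by unfold_locales (auto simp: sc_def fun_eq_iff algebra_simps)

definition code_dim :: "(nat \<Rightarrow> 'a::field) set \<Rightarrow> nat" where
  "code_dim C = vector_space.dim sc C"

definition lin_code :: "nat set \<Rightarrow> (nat \<Rightarrow> 'a::field) set \<Rightarrow> bool" where
  "lin_code S C \<longleftrightarrow> finite S \<and> module.subspace sc C \<and> (\<forall>c\<in>C. \<forall>j. j \<notin> S \<longrightarrow> c j = 0)"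

definition hdist :: "nat set \<Rightarrow> (nat \<Rightarrow> 'a) \<Rightarrow> (nat \<Rightarrow> 'a) \<Rightarrow> nat" where
  "hdist S x y = card {j\<in>S. x j \<noteq> y j}"

definition min_dist :: "nat set \<Rightarrow> (nat \<Rightarrow> 'a) set \<Rightarrow> nat" where
  "min_dist S C = Min {hdist S x y | x y. x \<in> C \<and> y \<in> C \<and> x \<noteq> y}"

definition is_MDS :: "nat set \<Rightarrow> nat \<Rightarrow> (nat \<Rightarrow> 'a::field) set \<Rightarrow> bool" where
  "is_MDS S k C \<longleftrightarrow> lin_code S C \<and> code_dim C = k \<and> min_dist S C = card S - k + 1"

(* row space of a k x n matrix G (rows 0..<k, columns 1..n) *)
definition gen_code :: "nat \<Rightarrow> nat \<Rightarrow> (nat \<Rightarrow> nat \<Rightarrow> 'a::field) \<Rightarrow> (nat \<Rightarrow> 'a) set" where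
  "gen_code n k G = {(\<lambda>j. if j \<in> {1..n} then (\<Sum>i<k. u i * G i j) else 0) | u. True}"

(* restriction of all codewords to coordinate set T; used both for the row
   space of a column block and for puncturing at the complement of T *)
definition restr_code :: "nat set \<Rightarrow> (nat \<Rightarrow> 'a::zero) set \<Rightarrow> (nat \<Rightarrow> 'a) set" where
  "restr_code T C = (\<lambda>c. (\<lambda>j. if j \<in> T then c j else 0)) ` C"

definition blk :: "(nat \<Rightarrow> nat) \<Rightarrow> nat \<Rightarrow> nat set" where
  "blk ns i = {(\<Sum>j\<in>{1..<i}. ns j) + 1 .. (\<Sum>j\<in>{1..i}. ns j)}"

definition M :: "nat \<Rightarrow> nat \<Rightarrow> (nat \<Rightarrow> nat) \<Rightarrow> (nat \<Rightarrow> nat) \<Rightarrow> nat" where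
  "M k m ns fs = card {I. I \<subseteq> {1..(\<Sum>i\<in>{1..m}. ns i)} \<and> card I = k \<and>
                        (\<forall>i\<in>{1..m}. card (I \<inter> blk ns i) \<le> fs i)}"

definition is_PMDS_gen :: "nat \<Rightarrow> nat \<Rightarrow> (nat \<Rightarrow> nat) \<Rightarrow> nat \<Rightarrow> (nat \<Rightarrow> nat \<Rightarrow> 'a::field) \<Rightarrow> bool" where
  "is_PMDS_gen m l r k G \<longleftrightarrow>
     (let n = (\<Sum>i\<in>{1..m}. r i + l); ns = (\<lambda>i. r i + l); C = gen_code n k G in
       k < n \<and> code_dim C = k \<and>
       (\<forall>i\<in>{1..m}. is_MDS (blk ns i) l (restr_code (blk ns i) C)) \<and>
       (\<forall>E. E \<subseteq> {1..n} \<and> (\<forall>i\<in>{1..m}. card (E \<inter> blk ns i) = r i) \<longrightarrow>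
            is_MDS ({1..n} - E) k (restr_code ({1..n} - E) C)))"

end

theory Submission
  imports Defs
begin

interpretation V: vector_space "sc :: 'a::field \<Rightarrow> (nat \<Rightarrow> 'a) \<Rightarrow> (nat \<Rightarrow> 'a)"
  by (rule vector_space_sc)

lemma sc_apply: "sc c v j = c * v j" by (simp add: sc_def)

definition FS :: "nat set \<Rightarrow> (nat \<Rightarrow> 'a::zero) set" where
  "FS X = {v. \<forall>j. j \<notin> X \<longrightarrow> v j = 0}"

lemma card_FS:
  assumes "finite X"
  shows "card (FS X :: (nat \<Rightarrow> 'a::{zero,finite}) set) = card (UNIV::'a set) ^ card X"
  using assms
proof (induction X rule: finite_induct)
  case empty
  have "FS {} = {(0::nat\<Rightarrow>'a)}" by (auto simp: FS_def fun_eq_iff)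
  then show ?case by simp
next
  case (insert x X)
  have eq: "(FS (insert x X) :: (nat \<Rightarrow> 'a) set) = (\<lambda>(v,t). v(x:=t)) ` (FS X \<times> UNIV)"
  proof (rule set_eqI, rule iffI)
    fix w :: "nat \<Rightarrow> 'a" assume "w \<in> FS (insert x X)"
    then have "w(x:=0) \<in> FS X" by (auto simp: FS_def)
    then show "w \<in> (\<lambda>(v,t). v(x:=t)) ` (FS X \<times> UNIV)"
      by (intro rev_image_eqI[where x="(w(x:=0), w x)"]) auto
  qed (auto simp: FS_def)
  have inj: "inj_on (\<lambda>(v,t). v(x:=t)) (FS X \<times> (UNIV::'a set))"
  proof (rule inj_onI, clarify)
    fix v t v' t' assume "v \<in> FS X" "v' \<in> FS X" "(v(x:=t) :: nat\<Rightarrow>'a) = v'(x:=t')"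
    then show "v = v' \<and> t = t'" using insert(2) by (auto simp: FS_def fun_eq_iff) metis+
  qed
  have "card (FS (insert x X) :: (nat \<Rightarrow> 'a) set) = card ((FS X :: (nat\<Rightarrow>'a) set) \<times> (UNIV::'a set))"
    using card_image[OF inj] eq by simp
  also have "\<dots> = card (UNIV::'a set) ^ card X * card (UNIV::'a set)" using insert by (simp add: card_cartesian_product)
  finally show ?case using insert by simp
qed

lemma finite_FS:
  assumes "finite X" shows "finite (FS X :: (nat \<Rightarrow> 'a::{zero,finite}) set)"
  using card_FS[OF assms, where 'a='a] card_ge_0_finite by (metis card.empty card_0_eq finite.emptyI
      finite_UNIV_card_ge_0 finite_class.finite_UNIV power_not_zero zero_less_iff_neq_zero)

lemma q_gt1: "1 < card (UNIV :: 'a::{field,finite} set)"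
proof -
  have "card {0::'a, 1} = 2" by simp
  moreover have "card {0::'a, 1} \<le> card (UNIV::'a set)" by (rule card_mono) auto
  ultimately show ?thesis by simp
qed

lemma card_span:
  fixes B :: "(nat \<Rightarrow> 'a::{field,finite}) set"
  assumes "finite B" "V.independent B"
  shows "card (V.span B) = card (UNIV::'a set) ^ card B"
  using assms
proof (induction B rule: finite_induct)
  case empty
  then show ?case by simp
next
  case (insert b B)
  have indB: "V.independent B" and nb: "b \<notin> V.span B"
    using insert.prems insert.hyps(2) V.independent_insert by metis+
  have eq: "V.span (insert b B) = (\<lambda>(x,t). x + sc t b) ` (V.span B \<times> UNIV)"
  proof (rule set_eqI, rule iffI)
    fix y assume "y \<in> V.span (insert b B)"
    then obtain t where "y - sc t b \<in> V.span B" by (auto simp: V.span_insert)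
    then show "y \<in> (\<lambda>(x,t). x + sc t b) ` (V.span B \<times> UNIV)"
      by (intro rev_image_eqI[where x="(y - sc t b, t)"]) auto
  next
    fix y assume "y \<in> (\<lambda>(x,t). x + sc t b) ` (V.span B \<times> UNIV)"
    then obtain x t where "x \<in> V.span B" "y = x + sc t b" by auto
    then show "y \<in> V.span (insert b B)"
      by (meson V.span_add V.span_base V.span_mono V.span_scale insertI1 subset_insertI subsetD)
  qed
  have inj: "inj_on (\<lambda>(x,t). x + sc t b) (V.span B \<times> (UNIV::'a set))"
  proof (rule inj_onI, clarify)
    fix x t x' t' assume x: "x \<in> V.span B" "x' \<in> V.span B" and e: "x + sc t b = x' + sc t' b"
    show "x = x' \<and> t = t'"
    proof (cases "t = t'")
      case True with e show ?thesis by simp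
    next
      case False
      have ej: "x j + t * b j = x' j + t' * b j" for j using fun_cong[OF e, of j] by (simp add: sc_apply)
      have "b = sc (inverse (t - t')) (x' - x)"
      proof
        fix j
        have h: "b j * (t - t') = x' j - x j" using ej[of j] by (simp add: algebra_simps)
        have nz: "t - t' \<noteq> 0" using False by simp
        have "b j = (b j * (t - t')) * inverse (t - t')" using nz by simp
        also have "\<dots> = inverse (t - t') * (x' j - x j)" using h by (simp add: mult.commute)
        finally show "b j = sc (inverse (t - t')) (x' - x) j" by (simp add: sc_apply)
      qed
      moreover have "sc (inverse (t - t')) (x' - x) \<in> V.span B"
        using x by (intro V.span_scale V.span_diff)
      ultimately show ?thesis using nb by simp
    qed
  qed
  have "card (V.span (insert b B)) = card (V.span B \<times> (UNIV::'a set))"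
    using card_image[OF inj] eq by simp
  also have "\<dots> = card (UNIV::'a set) ^ card B * card (UNIV::'a set)"
    using insert indB by (simp add: card_cartesian_product)
  finally show ?case using insert by simp
qed

lemma subspace_FS: "V.subspace (FS X)"
  by (auto simp: V.subspace_def FS_def sc_apply)

lemma card_dim:
  fixes C :: "(nat \<Rightarrow> 'a::{field,finite}) set"
  assumes "V.subspace C" "card C = card (UNIV::'a set) ^ d" "finite C"
  shows "V.dim C = d"
proof -
  obtain B where B: "B \<subseteq> C" "V.independent B" "C \<subseteq> V.span B" "card B = V.dim C"
    using V.basis_exists by blast
  have "V.span B \<subseteq> C" using B(1) assms(1) by (rule V.span_minimal)
  then have sp: "V.span B = C" using B(3) by blast
  have fin: "finite B" using B(1) assms(3) finite_subset by blast
  have "card (UNIV::'a set) ^ card B = card (UNIV::'a set) ^ d"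
    using card_span[OF fin B(2)] sp assms(2) by simp
  then have "card B = d" using q_gt1[where 'a='a] power_inject_exp by blast
  then show ?thesis using B(4) by simp
qed

definition ee :: "nat \<Rightarrow> nat \<Rightarrow> 'a::{zero,one}" where "ee t = (\<lambda>i. if i = t then 1 else 0)"

lemma FS_closure:
  fixes S :: "(nat \<Rightarrow> 'a::field) set"
  assumes "\<forall>x\<in>S. \<forall>y\<in>S. x + y \<in> S" "\<forall>c. \<forall>x\<in>S. sc c x \<in> S" "0 \<in> S" "\<forall>t<d. ee t \<in> S"
  shows "FS {..<d} \<subseteq> S"
  using assms(4)
proof (induction d)
  case 0
  have "FS {..<0} = {0::nat\<Rightarrow>'a}" by (auto simp: FS_def fun_eq_iff)
  then show ?case using assms(3) by simp
next
  case (Suc d)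
  show ?case
  proof
    fix v :: "nat \<Rightarrow> 'a" assume v: "v \<in> FS {..<Suc d}"
    have "v(d:=0) \<in> FS {..<d}" using v by (auto simp: FS_def)
    then have a: "v(d:=0) \<in> S" using Suc by auto
    have b: "sc (v d) (ee d) \<in> S" using Suc.prems assms(2) by auto
    have "v = v(d:=0) + sc (v d) (ee d)" by (auto simp: fun_eq_iff ee_def sc_apply)
    then show "v \<in> S" using a b assms(1) by metis
  qed
qed

lemma bad_bound:
  fixes A :: "(nat \<Rightarrow> 'a::{field,finite}) \<Rightarrow> (nat \<Rightarrow> 'a)"
  assumes addA: "\<And>x y. A (x + y) = A x + A y" and scA: "\<And>c x. A (sc c x) = sc c (A x)"
    and w0: "w0 \<in> FS {..<d}" "A w0 \<notin> V.span W"
  shows "card {w \<in> FS {..<d}. A w \<in> V.span W} \<le> card (UNIV::'a set) ^ (d - 1)"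
proof -
  define S where "S = {w. A w \<in> V.span W}"
  have A0: "A 0 = 0" using scA[of 0 0] by (simp add: sc_def zero_fun_def)
  have S1: "\<forall>x\<in>S. \<forall>y\<in>S. x + y \<in> S" unfolding S_def using addA V.span_add by auto
  have S2: "\<forall>c. \<forall>x\<in>S. sc c x \<in> S" unfolding S_def using scA V.span_scale by auto
  have S3: "0 \<in> S" unfolding S_def using A0 V.span_zero by auto
  have "\<not> (\<forall>t<d. ee t \<in> S)"
    using FS_closure[OF S1 S2 S3, of d] w0 unfolding S_def by auto
  then obtain t where t: "t < d" "ee t \<notin> S" by auto
  define B where "B = {w \<in> FS {..<d}. A w \<in> V.span W}"
  have inj: "inj_on (\<lambda>w. w(t:=0)) B"
  proof (rule inj_onI)
    fix w w' assume w: "w \<in> B" "w' \<in> B" and e: "w(t:=0) = w'(t:=0)"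
    have "w \<in> S" "w' \<in> S" using w unfolding B_def S_def by auto
    then have diff: "w + sc (-1) w' \<in> S" using S1 S2 by blast
    show "w = w'"
    proof (cases "w t = w' t")
      case True then show ?thesis using e by (metis fun_upd_triv fun_upd_upd)
    next
      case False
      have "ee t = sc (inverse (w t - w' t)) (w + sc (-1) w')"
      proof
        fix j show "ee t j = sc (inverse (w t - w' t)) (w + sc (-1) w') j"
        proof (cases "j = t")
          case True then show ?thesis using False left_inverse[of "w t - w' t"] by (simp add: ee_def sc_apply)
        next
          case f: False
          have "w j = w' j" using fun_cong[OF e, of j] f by simp
          then show ?thesis using f by (simp add: ee_def sc_apply)
        qed
      qed
      then have "ee t \<in> S" using diff S2 by metis
      then show ?thesis using t by simp
    qed
  qed
  have sub: "(\<lambda>w. w(t:=0)) ` B \<subseteq> FS ({..<d} - {t})" unfolding B_def FS_def by auto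
  have "card B = card ((\<lambda>w. w(t:=0)) ` B)" using card_image[OF inj] by simp
  also have "\<dots> \<le> card (FS ({..<d} - {t}) :: (nat \<Rightarrow> 'a) set)"
    by (rule card_mono[OF finite_FS sub]) simp
  also have "\<dots> = card (UNIV::'a set) ^ (d - 1)" using t by (simp add: card_FS)
  finally show ?thesis unfolding B_def .
qed

definition rho :: "nat set \<Rightarrow> (nat \<Rightarrow> 'a::zero) \<Rightarrow> (nat \<Rightarrow> 'a)" where
  "rho Z w = (\<lambda>j. if j \<in> Z then w j else 0)"

lemma MDS_crit:
  fixes C :: "(nat \<Rightarrow> 'a::{field,finite}) set"
  assumes S: "finite S" and CS: "C \<subseteq> FS S" and sub: "V.subspace C"
    and cardC: "card C = card (UNIV::'a set) ^ d" and d: "1 \<le> d" "d \<le> card S"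
    and surj: "\<And>Z. Z \<subseteq> S \<Longrightarrow> card Z = d \<Longrightarrow> rho Z ` C = FS Z"
  shows "is_MDS S d C"
proof -
  have finC: "finite C" using finite_subset[OF CS finite_FS[OF S]] .
  have lc: "lin_code S C" unfolding lin_code_def using S sub CS by (auto simp: FS_def)
  have dim: "code_dim C = d" unfolding code_dim_def using card_dim[OF sub cardC finC] .
  have inj: "inj_on (rho Z) C" if "Z \<subseteq> S" "card Z = d" for Z
  proof (rule eq_card_imp_inj_on[OF finC])
    have "finite Z" using that S finite_subset by blast
    then show "card (rho Z ` C) = card C" using surj[OF that] cardC card_FS that(2) by metis
  qed
  have lower: "card S - d + 1 \<le> hdist S x y" if xy: "x \<in> C" "y \<in> C" "x \<noteq> y" for x y
  proof -
    define w where "w = x - y"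
    have wC: "w \<in> C" unfolding w_def using V.subspace_diff[OF sub xy(1,2)] .
    have wn: "w \<noteq> 0" using xy(3) unfolding w_def by simp
    define Z0 where "Z0 = {j\<in>S. w j = 0}"
    have "card Z0 < d"
    proof (rule ccontr)
      assume "\<not> card Z0 < d"
      then obtain Z where Z: "Z \<subseteq> Z0" "card Z = d" by (meson not_less obtain_subset_with_card_n)
      have ZS: "Z \<subseteq> S" using Z(1) unfolding Z0_def by auto
      have "rho Z w = rho Z 0" using Z(1) unfolding Z0_def rho_def by (auto simp: fun_eq_iff)
      then have "w = 0" using inj_onD[OF inj[OF ZS Z(2)] _ wC V.subspace_0[OF sub]] by simp
      then show False using wn by simp
    qed
    have eq: "{j\<in>S. x j \<noteq> y j} = S - Z0" unfolding Z0_def w_def by auto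
    have "card (S - Z0) = card S - card Z0" using S by (intro card_Diff_subset) (auto simp: Z0_def)
    then show ?thesis unfolding hdist_def eq using \<open>card Z0 < d\<close> d by linarith
  qed
  obtain Z where Z: "Z \<subseteq> S" "card Z = d" using d(2) obtain_subset_with_card_n by metis
  then obtain j0 where j0: "j0 \<in> Z" using d(1) by fastforce
  define \<delta> where "\<delta> = (\<lambda>j. if j = j0 then (1::'a) else 0)"
  have "\<delta> \<in> FS Z" using j0 unfolding \<delta>_def FS_def by auto
  then obtain w where w: "w \<in> C" "rho Z w = \<delta>" using surj[OF Z] by (metis imageE)
  have wj0: "w j0 = 1" using fun_cong[OF w(2), of j0] j0 unfolding rho_def \<delta>_def by simp
  have wZ: "w j = 0" if "j \<in> Z - {j0}" for j using fun_cong[OF w(2), of j] that unfolding rho_def \<delta>_def by auto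
  have 0: "(0::nat\<Rightarrow>'a) \<in> C" using V.subspace_0[OF sub] .
  have wn: "w \<noteq> 0" using wj0 by auto
  have "{j\<in>S. w j \<noteq> 0 j} \<subseteq> S - (Z - {j0})" using wZ by auto
  then have "hdist S w 0 \<le> card (S - (Z - {j0}))" unfolding hdist_def by (intro card_mono) (use S in auto)
  also have "\<dots> = card S - (d - 1)" using Z j0 S
    by (subst card_Diff_subset) (auto intro: finite_subset)
  finally have up: "hdist S w 0 \<le> card S - d + 1" using d by linarith
  have wit: "hdist S w 0 = card S - d + 1" using up lower[OF w(1) 0 wn] by linarith
  define D where "D = {hdist S x y | x y. x \<in> C \<and> y \<in> C \<and> x \<noteq> y}"
  have finD: "finite D"
  proof -
    have "D \<subseteq> (\<lambda>(x,y). hdist S x y) ` (C \<times> C)" unfolding D_def by auto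
    then show ?thesis using finC finite_subset by blast
  qed
  have "Min D = card S - d + 1"
  proof (rule Min_eqI[OF finD])
    show "card S - d + 1 \<in> D" unfolding D_def using wit w(1) 0 wn by (intro CollectI exI[of _ w] exI[of _ 0]) auto
  qed (use lower in \<open>auto simp: D_def\<close>)
  then have "min_dist S C = card S - d + 1" unfolding min_dist_def D_def by simp
  then show ?thesis unfolding is_MDS_def using lc dim by simp
qed

lemma pick:
  fixes A :: "(nat \<Rightarrow> 'a::{field,finite}) \<Rightarrow> (nat \<Rightarrow> 'a)" and W :: "'t \<Rightarrow> (nat \<Rightarrow> 'a) set"
  assumes addA: "\<And>x y. A (x + y) = A x + A y" and scA: "\<And>c x. A (sc c x) = sc c (A x)"
    and fin: "finite Fam" and cardF: "card Fam < card (UNIV::'a set)" and d: "1 \<le> d"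
    and wit: "\<And>T. T \<in> Fam \<Longrightarrow> \<exists>w0\<in>FS {..<d}. A w0 \<notin> V.span (W T)"
  shows "\<exists>w\<in>FS {..<d}. \<forall>T\<in>Fam. A w \<notin> V.span (W T)"
proof (rule ccontr)
  assume "\<not> ?thesis"
  then have sub: "FS {..<d} \<subseteq> (\<Union>T\<in>Fam. {w \<in> FS {..<d}. A w \<in> V.span (W T)})" by blast
  have fU: "finite (\<Union>T\<in>Fam. {w \<in> FS {..<d}. A w \<in> V.span (W T)})"
    using fin finite_FS[of "{..<d}", where 'a='a] by auto
  have bb: "card {w \<in> FS {..<d}. A w \<in> V.span (W T)} \<le> card (UNIV::'a set) ^ (d - 1)" if T: "T \<in> Fam" for T
  proof -
    obtain w0 where "w0 \<in> FS {..<d}" "A w0 \<notin> V.span (W T)" using wit[OF T] by blast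
    then show ?thesis using bad_bound[OF addA scA] by blast
  qed
  have "card (FS {..<d} :: (nat\<Rightarrow>'a) set) \<le> card (\<Union>T\<in>Fam. {w \<in> FS {..<d}. A w \<in> V.span (W T)})"
    by (rule card_mono[OF fU sub])
  also have "\<dots> \<le> (\<Sum>T\<in>Fam. card {w \<in> FS {..<d}. A w \<in> V.span (W T)})" by (rule card_UN_le[OF fin])
  also have "\<dots> \<le> (\<Sum>T\<in>Fam. card (UNIV::'a set) ^ (d - 1))" by (rule sum_mono) (use bb in blast)
  also have "\<dots> = card Fam * card (UNIV::'a set) ^ (d - 1)" by simp
  also have "\<dots> < card (UNIV::'a set) * card (UNIV::'a set) ^ (d - 1)"
    using cardF q_gt1[where 'a='a] by (intro mult_strict_right_mono) auto
  also have "\<dots> = card (UNIV::'a set) ^ d" using d by (cases d) auto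
  finally show False using card_FS[of "{..<d}", where 'a='a] by simp
qed

lemma sum_fun_apply: "(sum f A) j = (\<Sum>x\<in>A. f x j)"
  by (induction A rule: infinite_finite_induct) auto

lemma ee_inj: "inj (ee :: nat \<Rightarrow> nat \<Rightarrow> 'a::{zero_neq_one})"
proof (rule injI)
  fix s t assume "(ee s :: nat \<Rightarrow> 'a) = ee t"
  then have "(ee s :: nat \<Rightarrow> 'a) s = ee t s" by simp
  then show "s = t" unfolding ee_def by (auto split: if_splits)
qed

lemma ee_indep: "V.independent ((ee :: nat \<Rightarrow> nat \<Rightarrow> 'a::field) ` {..<k})"
proof (rule V.independent_if_scalars_zero)
  show "finite ((ee :: nat \<Rightarrow> nat \<Rightarrow> 'a::field) ` {..<k})" by simp
  fix f :: "(nat \<Rightarrow> 'a) \<Rightarrow> 'a" and x :: "nat \<Rightarrow> 'a"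
  assume sum: "(\<Sum>x\<in>(ee :: nat \<Rightarrow> nat \<Rightarrow> 'a) ` {..<k}. sc (f x) x) = 0" and x: "x \<in> ee ` {..<k}"
  then obtain t where t: "t < k" "x = ee t" by auto
  have "0 = (\<Sum>x\<in>(ee :: nat \<Rightarrow> nat \<Rightarrow> 'a) ` {..<k}. sc (f x) x) t" using sum by simp
  also have "\<dots> = (\<Sum>y\<in>ee ` {..<k}. f y * y t)" by (simp add: sum_fun_apply sc_apply)
  also have "\<dots> = (\<Sum>s<k. f (ee s) * (ee s :: nat \<Rightarrow> 'a) t)"
    by (rule sum.reindex[OF inj_on_subset[OF ee_inj subset_UNIV], unfolded comp_def])
  also have "\<dots> = (\<Sum>s<k. if s = t then f (ee s) else 0)" by (rule sum.cong) (auto simp: ee_def)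
  also have "\<dots> = f (ee t)" using t by simp
  finally show "f x = 0" using t by simp
qed

lemma sum_Suc_gen: "1 \<le> (i::nat) \<Longrightarrow> (\<Sum>j\<in>{1..i}. f j) = (\<Sum>j\<in>{1..<i}. f j) + (f i :: nat)"
proof -
  assume "1 \<le> i"
  moreover have "{1..i} = {1..<Suc i}" by auto
  ultimately show ?thesis by (simp add: sum.atLeastLessThan_Suc)
qed

lemma blk_eq_gen: "1 \<le> (i::nat) \<Longrightarrow> blk f i = {(\<Sum>j\<in>{1..<i}. f j) + 1 .. (\<Sum>j\<in>{1..<i}. f j) + f i}"
  unfolding blk_def using sum_Suc_gen[of i f] by simp

locale pm =
  fixes m l k :: nat and r :: "nat \<Rightarrow> nat"
  assumes m2: "m \<ge> 2" and l1: "l \<ge> 1" and r1: "\<forall>i\<in>{1..m}. r i \<ge> 1"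
    and lk: "l \<le> k" and kml: "k < m * l"
begin
definition ns where "ns i = r i + l"
definition pre where "pre i = (\<Sum>j\<in>{1..<i}. ns j)"
definition J where "J i = blk ns i"
definition n where "n = (\<Sum>i\<in>{1..m}. ns i)"
definition fr where "fr i = {pre i + 1 .. pre i + l}"
definition adm where "adm cap A \<longleftrightarrow> A \<subseteq> {1..n} \<and> (\<forall>i\<in>{1..m}. card (A \<inter> J i) \<le> cap i)"
definition capi where "capi i = (\<lambda>j. if j = i then l - 1 else l)"

lemma sum_Suc: "1 \<le> i \<Longrightarrow> (\<Sum>j\<in>{1..i}. ns j) = pre i + ns i"
  unfolding pre_def by (simp add: atLeastLessThanSuc_atLeastAtMost[symmetric] sum.atLeastLessThan_Suc)

lemma pre_Suc: "1 \<le> i \<Longrightarrow> pre (Suc i) = pre i + ns i"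
  using sum_Suc unfolding pre_def by (simp add: atLeastLessThanSuc_atLeastAtMost)

lemma J_eq: "1 \<le> i \<Longrightarrow> J i = {pre i + 1 .. pre i + ns i}"
  unfolding J_def blk_def using sum_Suc by (simp add: pre_def)

lemma pre_mono: "a \<le> b \<Longrightarrow> pre a \<le> pre b"
  unfolding pre_def by (rule sum_mono2) auto

lemma pre_lt: "1 \<le> i \<Longrightarrow> i < i' \<Longrightarrow> pre i + ns i \<le> pre i'"
  using pre_Suc[of i] pre_mono[of "Suc i" i'] by simp

lemma J_disj: "i \<in> {1..m} \<Longrightarrow> i' \<in> {1..m} \<Longrightarrow> i \<noteq> i' \<Longrightarrow> J i \<inter> J i' = {}"
proof -
  assume a: "i \<in> {1..m}" "i' \<in> {1..m}" "i \<noteq> i'"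
  have "J i \<inter> J i' = {}" if "i < i'" "1 \<le> i" "1 \<le> i'" for i i'
    using pre_lt[OF that(2,1)] J_eq[OF that(2)] J_eq[OF that(3)] by auto
  note * = this
  show ?thesis
  proof (cases "i < i'")
    case True then show ?thesis using * a by auto
  next
    case False then have "i' < i" using a(3) by simp
    then have "J i' \<inter> J i = {}" using *[of i' i] a by auto
    then show ?thesis by (simp add: Int_commute)
  qed
qed

lemma J_disj': "i \<in> {1..m} \<Longrightarrow> i' \<in> {1..m} \<Longrightarrow> x \<in> J i \<Longrightarrow> x \<in> J i' \<Longrightarrow> i = i'"
  using J_disj by blast

lemma n_eq: "n = pre m + ns m"
  unfolding n_def using sum_Suc[of m] m2 by simp

lemma union_J_gen: "a \<le> m \<Longrightarrow> (\<Union>i\<in>{1..a}. J i) = {1..pre (Suc a)}"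
proof (induction a)
  case 0 then show ?case by (simp add: pre_def)
next
  case (Suc a)
  have "{1..Suc a} = insert (Suc a) {1..a}" by auto
  then have "(\<Union>i\<in>{1..Suc a}. J i) = J (Suc a) \<union> {1..pre (Suc a)}" using Suc by simp
  also have "\<dots> = {1..pre (Suc (Suc a))}"
  proof -
    have e1: "J (Suc a) = {pre (Suc a) + 1 .. pre (Suc a) + ns (Suc a)}" using J_eq[of "Suc a"] by simp
    have e2: "pre (Suc (Suc a)) = pre (Suc a) + ns (Suc a)" using pre_Suc[of "Suc a"] by simp
    show ?thesis unfolding e1 e2 by (rule set_eqI) (simp, linarith)
  qed
  finally show ?case .
qed

lemma union_J: "(\<Union>i\<in>{1..m}. J i) = {1..n}"
  using union_J_gen[of m] pre_Suc[of m] n_eq m2 by simp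

lemma J_sub: "i \<in> {1..m} \<Longrightarrow> J i \<subseteq> {1..n}"
  using union_J by auto

lemma card_J: "1 \<le> i \<Longrightarrow> card (J i) = ns i"
  using J_eq by simp

lemma finite_J[simp]: "finite (J i)"
  unfolding J_def blk_def by simp

lemma card_split: "A \<subseteq> {1..n} \<Longrightarrow> card A = (\<Sum>i\<in>{1..m}. card (A \<inter> J i))"
proof -
  assume A: "A \<subseteq> {1..n}"
  then have "A = (\<Union>i\<in>{1..m}. A \<inter> J i)" using union_J by auto
  then have "card A = card (\<Union>i\<in>{1..m}. A \<inter> J i)" by simp
  also have "\<dots> = (\<Sum>i\<in>{1..m}. card (A \<inter> J i))"
  proof (rule card_UN_disjoint)
    show "\<forall>i\<in>{1..m}. \<forall>j\<in>{1..m}. i \<noteq> j \<longrightarrow> A \<inter> J i \<inter> (A \<inter> J j) = {}" using J_disj by blast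
  qed auto
  finally show ?thesis .
qed

lemma blk_of: "j \<in> {1..n} \<Longrightarrow> \<exists>i\<in>{1..m}. j \<in> J i"
  using union_J by auto

lemma fr_sub: "1 \<le> i \<Longrightarrow> fr i \<subseteq> J i"
  unfolding fr_def using J_eq[of i] by (auto simp: ns_def)

lemma card_fr: "card (fr i) = l" unfolding fr_def by simp

lemma finite_fr[simp]: "finite (fr i)" unfolding fr_def by simp

lemma n_in_Jm: "n \<in> J m" using J_eq[of m] n_eq m2 l1 by (auto simp: ns_def)

lemma rm1: "r m \<ge> 1" using r1 m2 by auto

lemma n_pos: "n \<ge> 1" using n_eq l1 by (simp add: ns_def)

lemma n_notin_fr: "i \<in> {1..m} \<Longrightarrow> n \<notin> fr i"
proof
  assume i: "i \<in> {1..m}" and n: "n \<in> fr i"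
  then have "n \<in> J i" using fr_sub by auto
  then have "i = m" using J_disj[OF i, of m] n_in_Jm m2 i by (cases "i = m") auto
  then show False using n rm1 n_eq unfolding fr_def ns_def by auto
qed

lemma ml_le_n: "m * l \<le> n"
proof -
  have "m * l = (\<Sum>i\<in>{1..m}. l)" by simp
  also have "\<dots> \<le> n" unfolding n_def ns_def by (rule sum_mono) simp
  finally show ?thesis .
qed

definition ns' where "ns' = (\<lambda>i. if i = m then l + r i - 1 else l + r i)"
definition Fstar where "Fstar = {T. T \<subseteq> {1..n-1} \<and> card T = k - 1 \<and> (\<forall>i\<in>{1..m}. card (T \<inter> J i) \<le> capi m i)}"

lemma pre'_eq: "i \<le> m \<Longrightarrow> (\<Sum>j\<in>{1..<i}. ns' j) = pre i"
  unfolding pre_def by (rule sum.cong) (auto simp: ns'_def ns_def)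

lemma blk'_eq: "i \<in> {1..m} \<Longrightarrow> blk ns' i = J i - {n}"
proof -
  assume i: "i \<in> {1..m}"
  then have b: "blk ns' i = {pre i + 1 .. pre i + ns' i}" using blk_eq_gen[of i ns'] pre'_eq[of i] by simp
  show ?thesis
  proof (cases "i = m")
    case True
    then show ?thesis using b J_eq[of m] n_eq m2 rm1 by (auto simp: ns'_def ns_def)
  next
    case False
    then have "n \<notin> J i" using J_disj'[OF i, of m n] n_in_Jm m2 by auto
    then show ?thesis using b J_eq[of i] False i by (auto simp: ns'_def ns_def)
  qed
qed

lemma sum'_eq: "(\<Sum>j\<in>{1..m}. ns' j) = n - 1"
  using sum_Suc_gen[of m ns'] pre'_eq[of m] n_eq m2 rm1 by (simp add: ns'_def ns_def)

lemma Mstar_eq: "M (k - 1) m ns' (\<lambda>i. if i = m then l - 1 else l) = card Fstar"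
proof -
  have "{I. I \<subseteq> {1..(\<Sum>i\<in>{1..m}. ns' i)} \<and> card I = k - 1 \<and>
            (\<forall>i\<in>{1..m}. card (I \<inter> blk ns' i) \<le> (if i = m then l - 1 else l))} = Fstar"
    unfolding Fstar_def
  proof (rule Collect_cong)
    fix I
    show "(I \<subseteq> {1..(\<Sum>i\<in>{1..m}. ns' i)} \<and> card I = k - 1 \<and>
            (\<forall>i\<in>{1..m}. card (I \<inter> blk ns' i) \<le> (if i = m then l - 1 else l))) =
          (I \<subseteq> {1..n-1} \<and> card I = k - 1 \<and> (\<forall>i\<in>{1..m}. card (I \<inter> J i) \<le> capi m i))"
    proof (cases "I \<subseteq> {1..n-1}")
      case True
      then have nI: "n \<notin> I" using n_pos by auto
      have "I \<inter> blk ns' i = I \<inter> J i" if "i \<in> {1..m}" for i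
        using blk'_eq[OF that] nI by auto
      then show ?thesis using True sum'_eq n_pos by (auto simp: capi_def)
    qed (use sum'_eq in auto)
  qed
  then show ?thesis unfolding M_def Fstar_def by simp
qed

lemma finite_Fstar: "finite Fstar"
proof -
  have "Fstar \<subseteq> Pow {1..n-1}" unfolding Fstar_def by auto
  then show ?thesis by (rule finite_subset) simp
qed

lemma count_le:
  assumes i: "i \<in> {1..m}" and c: "c \<in> J i" and P: "P \<subseteq> {1..n} - {c, n}"
    and cond: "i = m \<or> P \<inter> J m \<subseteq> fr m"
  shows "card {T. T \<subseteq> P \<and> card T = k - 1 \<and> adm (capi i) T} \<le> card Fstar"
proof -
  define A where "A = {T. T \<subseteq> P \<and> card T = k - 1 \<and> adm (capi i) T}"
  define f0 where "f0 = pre m + 1"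
  have f0fr: "f0 \<in> fr m" unfolding f0_def fr_def using l1 by simp
  have f0J: "f0 \<in> J m" using f0fr fr_sub[of m] m2 by auto
  define h where "h T = (if card (T \<inter> J m) \<le> l - 1 then T else insert c (T - {f0}))" for T
  have m1: "m \<in> {1..m}" using m2 by simp
  have cn: "c \<in> {1..n}" using P c J_sub[OF i] by auto
  have finP: "finite P" using P finite_subset by blast
  have cP: "c \<notin> P" "n \<notin> P" using P by auto
  have case2: "i \<noteq> m \<and> T \<inter> J m = fr m \<and> f0 \<in> T" if T: "T \<in> A" "\<not> card (T \<inter> J m) \<le> l - 1" for T
  proof -
    have adm: "\<forall>i'\<in>{1..m}. card (T \<inter> J i') \<le> capi i i'" using T(1) unfolding A_def adm_def by auto
    have im: "i \<noteq> m" using adm[rule_format, OF m1] T(2) by (auto simp: capi_def)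
    then have sub: "T \<inter> J m \<subseteq> fr m" using cond T(1) unfolding A_def by auto
    have "card (T \<inter> J m) \<ge> l" using T(2) l1 by simp
    then have "T \<inter> J m = fr m" using card_subset_eq[OF finite_fr sub] card_mono[OF finite_fr sub] card_fr by simp
    then show ?thesis using im f0fr by auto
  qed
  have hA: "h ` A \<subseteq> Fstar"
  proof
    fix T' assume "T' \<in> h ` A"
    then obtain T where T: "T \<in> A" "T' = h T" by auto
    have TP: "T \<subseteq> P" and cT: "card T = k - 1" and adm: "\<forall>i'\<in>{1..m}. card (T \<inter> J i') \<le> capi i i'"
      using T(1) unfolding A_def adm_def by auto
    have finT: "finite T" using TP finP finite_subset by blast
    show "T' \<in> Fstar"
    proof (cases "card (T \<inter> J m) \<le> l - 1")
      case True
      have "card (T \<inter> J i') \<le> capi m i'" if "i' \<in> {1..m}" for i'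
        using adm[rule_format, OF that] True by (auto simp: capi_def split: if_splits)
      moreover have "T' = T" using True T(2) unfolding h_def by simp
      moreover have "T \<subseteq> {1..n-1}" using TP P n_pos by auto
      ultimately show ?thesis using cT unfolding Fstar_def by simp
    next
      case False
      note c2 = case2[OF T(1) False]
      have T'eq: "T' = insert c (T - {f0})" using T(2) False unfolding h_def by simp
      have "c \<noteq> n" using c2 J_disj'[OF i m1, of n] c n_in_Jm by blast
      moreover have "T \<subseteq> {1..n} - {n}" using TP P by blast
      ultimately have "T' \<subseteq> {1..n} - {n}" using T'eq cn by blast
      then have sub: "T' \<subseteq> {1..n-1}" by auto
      have "c \<notin> T - {f0}" using cP TP by blast
      then have "card T' = Suc (card (T - {f0}))" using T'eq finT by simp
      also have "\<dots> = card T" using c2 finT card_Suc_Diff1 by metis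
      finally have cT': "card T' = k - 1" using cT by simp
      have "card (T' \<inter> J i') \<le> capi m i'" if i': "i' \<in> {1..m}" for i'
      proof (cases "i' = m")
        case True
        have "c \<notin> J m" using J_disj'[OF i m1, of c] c c2 by blast
        then have "T' \<inter> J m = (T \<inter> J m) - {f0}" using T'eq by blast
        then have "card (T' \<inter> J m) = l - 1" using c2 f0fr card_fr by simp
        then show ?thesis using True by (simp add: capi_def)
      next
        case f: False
        show ?thesis
        proof (cases "i' = i")
          case True
          have "T' \<inter> J i \<subseteq> insert c (T \<inter> J i)" using T'eq by blast
          then have "card (T' \<inter> J i) \<le> card (insert c (T \<inter> J i))"
            by (intro card_mono) (use finT in auto)
          also have "\<dots> \<le> Suc (card (T \<inter> J i))" using finT by (simp add: card_insert_if)
          finally have "card (T' \<inter> J i) \<le> Suc (card (T \<inter> J i))" .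
          moreover have "card (T \<inter> J i) \<le> l - 1" using adm[rule_format, OF i] by (simp add: capi_def)
          ultimately show ?thesis using True f l1 by (simp add: capi_def)
        next
          case False
          have "c \<notin> J i'" using J_disj'[OF i i', of c] c False by blast
          then have "T' \<inter> J i' \<subseteq> T \<inter> J i'" using T'eq by blast
          then have "card (T' \<inter> J i') \<le> card (T \<inter> J i')" by (intro card_mono) (auto simp: finT)
          then show ?thesis using adm[rule_format, OF i'] f False by (simp add: capi_def)
        qed
      qed
      then show ?thesis using sub cT' unfolding Fstar_def by auto
    qed
  qed
  have inj: "inj_on h A"
  proof (rule inj_onI)
    fix T1 T2 assume T: "T1 \<in> A" "T2 \<in> A" "h T1 = h T2"
    have ncT: "c \<notin> T1" "c \<notin> T2" using T cP unfolding A_def by auto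
    show "T1 = T2"
    proof (cases "card (T1 \<inter> J m) \<le> l - 1"; cases "card (T2 \<inter> J m) \<le> l - 1")
      assume "card (T1 \<inter> J m) \<le> l - 1" "card (T2 \<inter> J m) \<le> l - 1"
      then show ?thesis using T(3) unfolding h_def by simp
    next
      assume a: "card (T1 \<inter> J m) \<le> l - 1" "\<not> card (T2 \<inter> J m) \<le> l - 1"
      then have "c \<in> h T2" "c \<notin> h T1" using ncT unfolding h_def by auto
      then show ?thesis using T(3) by simp
    next
      assume a: "\<not> card (T1 \<inter> J m) \<le> l - 1" "card (T2 \<inter> J m) \<le> l - 1"
      then have "c \<in> h T1" "c \<notin> h T2" using ncT unfolding h_def by auto
      then show ?thesis using T(3) by simp
    next
      assume a: "\<not> card (T1 \<inter> J m) \<le> l - 1" "\<not> card (T2 \<inter> J m) \<le> l - 1"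
      then have e: "insert c (T1 - {f0}) = insert c (T2 - {f0})" using T(3) unfolding h_def by simp
      have "f0 \<in> T1" "f0 \<in> T2" using case2[OF T(1) a(1)] case2[OF T(2) a(2)] by auto
      moreover have "T1 - {f0} = T2 - {f0}"
      proof -
        have "T1 - {f0} = insert c (T1 - {f0}) - {c}" using ncT by auto
        also have "\<dots> = insert c (T2 - {f0}) - {c}" using e by simp
        also have "\<dots> = T2 - {f0}" using ncT by auto
        finally show ?thesis .
      qed
      ultimately show ?thesis by blast
    qed
  qed
  have "card A = card (h ` A)" using card_image[OF inj] by simp
  also have "\<dots> \<le> card Fstar" by (rule card_mono[OF finite_Fstar hA])
  finally show ?thesis unfolding A_def .
qed

lemma adm_mono: "adm cap S \<Longrightarrow> T \<subseteq> S \<Longrightarrow> adm cap T"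
  unfolding adm_def by (meson card_mono finite_Int finite_J le_trans inf_mono order_refl subset_trans)

lemma adm_finite: "adm cap S \<Longrightarrow> finite S"
  unfolding adm_def using finite_subset by blast

lemma augment_step:
  assumes T: "adm cap T" and S: "adm cap S" and lt: "card T < card S"
  shows "\<exists>x\<in>S - T. adm cap (insert x T)"
proof -
  have TS: "T \<subseteq> {1..n}" "S \<subseteq> {1..n}" using T S unfolding adm_def by auto
  have "\<exists>i\<in>{1..m}. card (T \<inter> J i) < card (S \<inter> J i)"
  proof (rule ccontr)
    assume "\<not> ?thesis"
    then have "(\<Sum>i\<in>{1..m}. card (S \<inter> J i)) \<le> (\<Sum>i\<in>{1..m}. card (T \<inter> J i))"
      by (intro sum_mono) (simp add: not_less)
    then show False using card_split[OF TS(1)] card_split[OF TS(2)] lt by simp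
  qed
  then obtain i where i: "i \<in> {1..m}" "card (T \<inter> J i) < card (S \<inter> J i)" by blast
  have "\<not> S \<inter> J i \<subseteq> T \<inter> J i"
  proof
    assume "S \<inter> J i \<subseteq> T \<inter> J i"
    then have "card (S \<inter> J i) \<le> card (T \<inter> J i)" by (intro card_mono) auto
    then show False using i by simp
  qed
  then obtain x where x: "x \<in> S" "x \<in> J i" "x \<notin> T" by blast
  have finT: "finite T" using adm_finite[OF T] .
  have "card (insert x T \<inter> J i') \<le> cap i'" if i': "i' \<in> {1..m}" for i'
  proof (cases "i' = i")
    case True
    have "insert x T \<inter> J i = insert x (T \<inter> J i)" using x by auto
    then have "card (insert x T \<inter> J i) = Suc (card (T \<inter> J i))" using x finT by simp
    also have "\<dots> \<le> card (S \<inter> J i)" using i by simp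
    also have "\<dots> \<le> cap i" using S i unfolding adm_def by auto
    finally show ?thesis using True by simp
  next
    case False
    then have "x \<notin> J i'" using J_disj'[OF i(1) i', of x] x by blast
    then have "insert x T \<inter> J i' = T \<inter> J i'" by auto
    then show ?thesis using T i' unfolding adm_def by auto
  qed
  then have "adm cap (insert x T)" using TS x unfolding adm_def by auto
  then show ?thesis using x by blast
qed

lemma augment:
  assumes "adm cap T" "adm cap S" "card T \<le> card S"
  shows "\<exists>T'. T \<subseteq> T' \<and> adm cap T' \<and> card T' = card S \<and> T' \<subseteq> T \<union> S"
proof -
  have "\<And>T. adm cap T \<Longrightarrow> card T \<le> card S \<Longrightarrow> card S - card T = d \<Longrightarrow>
    \<exists>T'. T \<subseteq> T' \<and> adm cap T' \<and> card T' = card S \<and> T' \<subseteq> T \<union> S" for d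
  proof (induction d)
    case 0 then show ?case by auto
  next
    case (Suc d)
    then obtain x where x: "x \<in> S - T" "adm cap (insert x T)"
      using augment_step[OF Suc.prems(1) assms(2)] by fastforce
    have "card (insert x T) = Suc (card T)" using x adm_finite[OF Suc.prems(1)] by simp
    then obtain T' where "insert x T \<subseteq> T'" "adm cap T'" "card T' = card S" "T' \<subseteq> insert x T \<union> S"
      using Suc.IH[OF x(2)] Suc.prems by fastforce
    then show ?case using x by blast
  qed
  then show ?thesis using assms by blast
qed

definition Free where "Free = (\<Union>i\<in>{1..m}. fr i)"

lemma Free_J: "i \<in> {1..m} \<Longrightarrow> Free \<inter> J i = fr i"
proof -
  assume i: "i \<in> {1..m}"
  have "fr i' \<inter> J i = {}" if "i' \<in> {1..m}" "i' \<noteq> i" for i'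
    using fr_sub[of i'] J_disj[OF that(1) i that(2)] that(1) by auto
  note * = this
  show ?thesis
  proof
    show "Free \<inter> J i \<subseteq> fr i"
    proof
      fix x assume "x \<in> Free \<inter> J i"
      then obtain i' where "i' \<in> {1..m}" "x \<in> fr i'" "x \<in> J i" unfolding Free_def by auto
      then show "x \<in> fr i" using * by (cases "i' = i") auto
    qed
  qed (use fr_sub[of i] i in \<open>auto simp: Free_def\<close>)
qed

lemma Free_sub: "Free \<subseteq> {1..n}" unfolding Free_def using fr_sub J_sub by fastforce

lemma n_notin_Free: "n \<notin> Free" unfolding Free_def using n_notin_fr by auto

lemma adm_Free: "adm (\<lambda>_. l) Free"
  unfolding adm_def using Free_sub Free_J card_fr by simp

lemma card_Free: "card Free = m * l"
  using card_split[OF Free_sub] Free_J card_fr by simp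

definition S0 where "S0 = (SOME S. S \<subseteq> Free \<and> card S = k)"

lemma S0: "S0 \<subseteq> Free" "card S0 = k"
proof -
  have "\<exists>S. S \<subseteq> Free \<and> card S = k" using card_Free kml obtain_subset_with_card_n
    by (metis less_imp_le_nat)
  then have "S0 \<subseteq> Free \<and> card S0 = k" unfolding S0_def by (rule someI_ex)
  then show "S0 \<subseteq> Free" "card S0 = k" by auto
qed

lemma adm_S0: "adm (\<lambda>_. l) S0" using adm_mono[OF adm_Free S0(1)] .

lemma finite_S0: "finite S0" using adm_finite[OF adm_S0] .

definition indep :: "(nat \<Rightarrow> nat \<Rightarrow> 'a::field) \<Rightarrow> nat set \<Rightarrow> bool" where
  "indep g I \<longleftrightarrow> V.independent (g ` I) \<and> inj_on g I"

definition Inv :: "nat set \<Rightarrow> (nat \<Rightarrow> nat \<Rightarrow> 'a::field) \<Rightarrow> bool" where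
  "Inv P g \<longleftrightarrow> P \<subseteq> {1..n} \<and> (\<forall>j\<in>P. g j \<in> FS {..<k}) \<and>
     (\<forall>I. I \<subseteq> P \<longrightarrow> adm (\<lambda>_. l) I \<longrightarrow> card I \<le> k \<longrightarrow> indep g I) \<and>
     (\<forall>i\<in>{1..m}. \<forall>j\<in>P \<inter> J i. j \<notin> fr i \<longrightarrow> fr i \<subseteq> P \<and> g j \<in> V.span (g ` fr i)) \<and>
     S0 \<subseteq> P"

lemma adm_capi_l: "adm (capi i) T \<Longrightarrow> adm (\<lambda>_. l) T"
  unfolding adm_def capi_def by (auto simp: le_diff_conv2 split: if_splits)

lemma S0_minus:
  assumes i: "i \<in> {1..m}"
  shows "\<exists>x0\<in>S0. adm (capi i) (S0 - {x0}) \<and> card (S0 - {x0}) = k - 1"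
proof -
  have k1: "k \<ge> 1" using lk l1 by simp
  obtain x0 where x0: "x0 \<in> S0" "card ((S0 - {x0}) \<inter> J i) \<le> l - 1"
  proof (cases "S0 \<inter> J i = {}")
    case True
    obtain x where "x \<in> S0" using S0(2) k1 by fastforce
    then show ?thesis using that True by (metis Diff_Int2 Diff_empty card.empty le0 inf_bot_left
          inf_commute Int_Diff)
  next
    case False
    then obtain x where x: "x \<in> S0" "x \<in> J i" by blast
    have "card (S0 \<inter> J i) \<le> l" using adm_S0 i unfolding adm_def by auto
    moreover have "(S0 - {x}) \<inter> J i = (S0 \<inter> J i) - {x}" by auto
    moreover have "card ((S0 \<inter> J i) - {x}) = card (S0 \<inter> J i) - 1" using x finite_S0 by simp
    ultimately show ?thesis using that x by simp
  qed
  have "adm (capi i) (S0 - {x0})"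
    unfolding adm_def capi_def
  proof (intro conjI ballI)
    show "S0 - {x0} \<subseteq> {1..n}" using adm_S0 unfolding adm_def by auto
    fix i' assume i': "i' \<in> {1..m}"
    have "card ((S0 - {x0}) \<inter> J i') \<le> card (S0 \<inter> J i')" by (intro card_mono) (auto simp: finite_S0)
    also have "\<dots> \<le> l" using adm_S0 i' unfolding adm_def by auto
    finally show "card ((S0 - {x0}) \<inter> J i') \<le> (if i' = i then l - 1 else l)" using x0 by simp
  qed
  moreover have "card (S0 - {x0}) = k - 1" using x0(1) S0(2) finite_S0 by simp
  ultimately show ?thesis using x0(1) by blast
qed

lemma extend:
  fixes g :: "nat \<Rightarrow> nat \<Rightarrow> 'a::{field,finite}"
  assumes inv: "Inv P g" and i: "i \<in> {1..m}" and c: "c \<in> J i" "c \<notin> P"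
    and dep: "c \<notin> fr i \<Longrightarrow> fr i \<subseteq> P"
    and cnt: "card {T. T \<subseteq> P \<and> card T = k - 1 \<and> adm (capi i) T} < card (UNIV::'a set)"
  shows "\<exists>v. Inv (insert c P) (g(c := v))"
proof -
  define Fam where "Fam = {T. T \<subseteq> P \<and> card T = k - 1 \<and> adm (capi i) T}"
  have P: "P \<subseteq> {1..n}" using inv unfolding Inv_def by (elim conjE) assumption
  have gk: "\<forall>j\<in>P. g j \<in> FS {..<k}" using inv unfolding Inv_def by (elim conjE) assumption
  have ind0: "\<forall>I. I \<subseteq> P \<longrightarrow> adm (\<lambda>_. l) I \<longrightarrow> card I \<le> k \<longrightarrow> indep g I"
    using inv unfolding Inv_def by (elim conjE) assumption
  have ind: "\<And>I. I \<subseteq> P \<Longrightarrow> adm (\<lambda>_. l) I \<Longrightarrow> card I \<le> k \<Longrightarrow> indep g I"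
    using ind0 by blast
  have dp: "\<forall>i\<in>{1..m}. \<forall>j\<in>P \<inter> J i. j \<notin> fr i \<longrightarrow> fr i \<subseteq> P \<and> g j \<in> V.span (g ` fr i)"
    using inv unfolding Inv_def by (elim conjE) assumption
  have S0P: "S0 \<subseteq> P" using inv unfolding Inv_def by (elim conjE) assumption
  have finP: "finite P" using P finite_subset by blast
  have "Fam \<subseteq> Pow P" unfolding Fam_def by blast
  then have finFam: "finite Fam" using finP by (simp add: finite_subset)
  have cntF: "card Fam < card (UNIV::'a set)" using cnt unfolding Fam_def .
  have k1: "k \<ge> 1" using lk l1 by simp
  have main: "\<exists>v. v \<in> FS {..<k} \<and> (\<forall>T\<in>Fam. v \<notin> V.span (g ` T)) \<and>
      (c \<notin> fr i \<longrightarrow> v \<in> V.span (g ` fr i))"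
  proof (cases "c \<in> fr i")
    case True
    have wit: "\<exists>w0\<in>FS {..<k}. id w0 \<notin> V.span (g ` T)" if T: "T \<in> Fam" for T
    proof (rule ccontr)
      assume "\<not> ?thesis"
      then have sp: "g ` S0 \<subseteq> V.span (g ` T)" using gk S0P by auto
      have iS0: "indep g S0" using ind[OF S0P adm_S0] S0(2) by simp
      have finT: "finite T" using T finP finite_subset unfolding Fam_def by blast
      have "card (g ` S0) \<le> card (g ` T)"
        using V.independent_span_bound[OF _ _ sp] iS0 finT unfolding indep_def by blast
      moreover have "card (g ` S0) = k" using iS0 S0(2) card_image unfolding indep_def by metis
      moreover have "card (g ` T) \<le> k - 1" using card_image_le[OF finT, of g] T unfolding Fam_def by simp
      ultimately show False using k1 by simp
    qed
    have "\<exists>w\<in>FS {..<k}. \<forall>T\<in>Fam. id w \<notin> V.span ((\<lambda>T. g ` T) T)"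
      by (rule pick[where A=id and W="\<lambda>T. g ` T", OF _ _ finFam cntF k1]) (use wit in auto)
    then obtain w where "w \<in> FS {..<k}" "\<forall>T\<in>Fam. id w \<notin> V.span (g ` T)" by auto
    then show ?thesis using True by auto
  next
    case False
    have frP: "fr i \<subseteq> P" using dep False .
    define A where "A w = (\<Sum>t<l. sc (w t) (g (pre i + 1 + t)))" for w :: "nat \<Rightarrow> 'a"
    have addA: "A (x + y) = A x + A y" for x y
      unfolding A_def by (simp add: V.scale_left_distrib sum.distrib)
    have scA: "A (sc a x) = sc a (A x)" for a x
      unfolding A_def by (simp add: sc_apply V.scale_sum_right V.scale_scale)
    have frim: "fr i = (\<lambda>t. pre i + 1 + t) ` {..<l}"
    proof
      show "fr i \<subseteq> (\<lambda>t. pre i + 1 + t) ` {..<l}"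
      proof
        fix x assume "x \<in> fr i"
        then have "x - (pre i + 1) < l" "x = pre i + 1 + (x - (pre i + 1))" unfolding fr_def by auto
        then show "x \<in> (\<lambda>t. pre i + 1 + t) ` {..<l}" by blast
      qed
    qed (auto simp: fr_def)
    have Aee: "A (ee t) = g (pre i + 1 + t)" if "t < l" for t
    proof -
      have "A (ee t) = (\<Sum>s<l. if s = t then g (pre i + 1 + s) else 0)"
        unfolding A_def by (rule sum.cong) (auto simp: ee_def)
      also have "\<dots> = g (pre i + 1 + t)" using that by simp
      finally show ?thesis .
    qed
    have wit: "\<exists>w0\<in>FS {..<l}. A w0 \<notin> V.span (g ` T)" if T: "T \<in> Fam" for T
    proof -
      have TP: "T \<subseteq> P" and cT: "card T = k - 1" and aT: "adm (capi i) T" using T unfolding Fam_def by auto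
      have finT: "finite T" using TP finP finite_subset by blast
      have "card (T \<inter> J i) \<le> capi i i" using aT i unfolding adm_def by blast
      then have cTi: "card (T \<inter> J i) \<le> l - 1" by (simp add: capi_def)
      have "\<not> fr i \<subseteq> T"
      proof (intro notI)
        assume "fr i \<subseteq> T"
        then have fT: "fr i \<subseteq> T \<inter> J i" using fr_sub[of i] i by auto
        then have "l \<le> card (T \<inter> J i)" using card_mono[OF _ fT] finT card_fr by simp
        then show False using cTi l1 by simp
      qed
      then obtain x where x: "x \<in> fr i" "x \<notin> T" by blast
      have xJ: "x \<in> J i" using x fr_sub[of i] i by auto
      have aI: "adm (\<lambda>_. l) (insert x T)"
        unfolding adm_def
      proof (intro conjI ballI)
        show "insert x T \<subseteq> {1..n}" using xJ J_sub[OF i] aT unfolding adm_def by auto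
        fix i' assume i': "i' \<in> {1..m}"
        show "card (insert x T \<inter> J i') \<le> l"
        proof (cases "i' = i")
          case True
          have "insert x T \<inter> J i = insert x (T \<inter> J i)" using xJ by auto
          then have "card (insert x T \<inter> J i) = Suc (card (T \<inter> J i))" using x finT by simp
          then show ?thesis using True cTi l1 by simp
        next
          case False
          then have "x \<notin> J i'" using J_disj'[OF i i', of x] xJ by blast
          then have "insert x T \<inter> J i' = T \<inter> J i'" by auto
          then show ?thesis using adm_capi_l[OF aT] i' unfolding adm_def by auto
        qed
      qed
      have xP: "insert x T \<subseteq> P" using x frP TP by auto
      have "card (insert x T) \<le> k" using x finT cT k1 by simp
      then have "indep g (insert x T)" using ind[OF xP aI] by simp
      then have "V.independent (insert (g x) (g ` T))" "g x \<notin> g ` T"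
        unfolding indep_def using x(2) by (auto simp: inj_on_insert)
      then have "g x \<notin> V.span (g ` T)" using V.independent_insert by metis
      moreover obtain t where t: "t < l" "x = pre i + 1 + t" using x frim by auto
      moreover have "ee t \<in> FS {..<l}" using t by (auto simp: FS_def ee_def)
      ultimately show ?thesis using Aee by metis
    qed
    have "\<exists>w\<in>FS {..<l}. \<forall>T\<in>Fam. A w \<notin> V.span ((\<lambda>T. g ` T) T)"
      by (rule pick[where A=A and W="\<lambda>T. g ` T", OF addA scA finFam cntF l1]) (use wit in auto)
    then obtain w where w: "w \<in> FS {..<l}" "\<forall>T\<in>Fam. A w \<notin> V.span (g ` T)" by auto
    have "A w \<in> FS {..<k}" unfolding A_def
    proof (intro V.subspace_sum[OF subspace_FS] V.subspace_scale[OF subspace_FS])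
      fix t assume "t \<in> {..<l}"
      then have "pre i + 1 + t \<in> P" using frP frim by auto
      then show "g (pre i + 1 + t) \<in> FS {..<k}" using gk by auto
    qed
    moreover have "A w \<in> V.span (g ` fr i)" unfolding A_def
      by (intro V.span_sum V.span_scale V.span_base) (use frim in auto)
    ultimately show ?thesis using w by auto
  qed
  then obtain v where v: "v \<in> FS {..<k}" "\<forall>T\<in>Fam. v \<notin> V.span (g ` T)"
    "c \<notin> fr i \<Longrightarrow> v \<in> V.span (g ` fr i)" by blast
  define g' where "g' = g(c := v)"
  have cn: "c \<in> {1..n}" using c J_sub[OF i] by auto
  have g'P: "g' ` X = g ` X" if "c \<notin> X" for X using that unfolding g'_def by auto
  have A1: "insert c P \<subseteq> {1..n}" using P cn by auto
  have A2: "\<forall>j\<in>insert c P. g' j \<in> FS {..<k}" using gk v unfolding g'_def by auto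
  have A3: "indep g' I" if I: "I \<subseteq> insert c P" "adm (\<lambda>_. l) I" "card I \<le> k" for I
  proof (cases "c \<in> I")
    case False
    then have IP: "I \<subseteq> P" using I by auto
    then have iI: "indep g I" using ind I by blast
    have "inj_on g' I = inj_on g I" using False unfolding g'_def by (intro inj_on_cong) auto
    then show ?thesis using iI unfolding indep_def using g'P[OF False] by simp
  next
    case True
    define T0 where "T0 = I - {c}"
    have finI: "finite I" using adm_finite[OF I(2)] .
    have T0P: "T0 \<subseteq> P" using I(1) unfolding T0_def by auto
    have cT0: "card T0 \<le> k - 1" using True finI I(3) unfolding T0_def by simp
    have aT0: "adm (capi i) T0"
      unfolding adm_def capi_def
    proof (intro conjI ballI)
      show "T0 \<subseteq> {1..n}" using T0P P by auto
      fix i' assume i': "i' \<in> {1..m}"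
      have le: "card (I \<inter> J i') \<le> l" using I(2) i' unfolding adm_def by auto
      show "card (T0 \<inter> J i') \<le> (if i' = i then l - 1 else l)"
      proof (cases "i' = i")
        case True
        have "T0 \<inter> J i = (I \<inter> J i) - {c}" unfolding T0_def by auto
        moreover have "card ((I \<inter> J i) - {c}) = card (I \<inter> J i) - 1"
          using \<open>c \<in> I\<close> c finI by simp
        ultimately show ?thesis using le True by simp
      next
        case False
        have "card (T0 \<inter> J i') \<le> card (I \<inter> J i')" unfolding T0_def by (intro card_mono) (auto simp: finI)
        then show ?thesis using le False by simp
      qed
    qed
    obtain x0 where x0: "x0 \<in> S0" "adm (capi i) (S0 - {x0})" "card (S0 - {x0}) = k - 1"
      using S0_minus[OF i] by blast
    obtain T where T: "T0 \<subseteq> T" "adm (capi i) T" "card T = k - 1" "T \<subseteq> T0 \<union> (S0 - {x0})"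
      using augment[OF aT0 x0(2)] cT0 x0(3) by auto
    have TP: "T \<subseteq> P" using T(4) T0P S0P by blast
    have TF: "T \<in> Fam" unfolding Fam_def using T(2,3) TP by blast
    have nsp: "v \<notin> V.span (g ` T0)"
      using v(2) TF V.span_mono[of "g ` T0" "g ` T"] T(1) by blast
    have T0I: "T0 \<subseteq> I" unfolding T0_def by blast
    have iT0: "indep g T0" using ind[OF T0P adm_mono[OF I(2) T0I]] cT0 by simp
    have Ieq: "I = insert c T0" using True unfolding T0_def by auto
    have cT0n: "c \<notin> T0" unfolding T0_def by simp
    have g'c: "g' c = v" unfolding g'_def by simp
    have "g' ` I = insert (g' c) (g' ` T0)" using Ieq by simp
    then have img: "g' ` I = insert v (g ` T0)" by (simp only: g'c g'P[OF cT0n])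
    have vn: "v \<notin> g ` T0" using nsp V.span_superset by blast
    have "inj_on g' T0 = inj_on g T0" using cT0n unfolding g'_def by (intro inj_on_cong) auto
    then have "inj_on g' T0" using iT0 unfolding indep_def by simp
    moreover have "g' c \<notin> g' ` T0" using vn g'P[OF cT0n] unfolding g'_def by simp
    ultimately have "inj_on g' I" using Ieq cT0n by (simp add: inj_on_insert)
    moreover have "V.independent (g' ` I)" using img V.independent_insertI[OF nsp] iT0
      unfolding indep_def by simp
    ultimately show ?thesis unfolding indep_def by simp
  qed
  have A4: "\<forall>i'\<in>{1..m}. \<forall>j\<in>insert c P \<inter> J i'. j \<notin> fr i' \<longrightarrow>
      fr i' \<subseteq> insert c P \<and> g' j \<in> V.span (g' ` fr i')"
  proof (intro ballI impI)
    fix i' j assume i': "i' \<in> {1..m}" and j: "j \<in> insert c P \<inter> J i'" and jf: "j \<notin> fr i'"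
    show "fr i' \<subseteq> insert c P \<and> g' j \<in> V.span (g' ` fr i')"
    proof (cases "j = c")
      case True
      then have ii: "i' = i" using J_disj'[OF i i', of c] c j by blast
      then have cf: "c \<notin> fr i" using jf True by simp
      have "g' j = v" using True unfolding g'_def by simp
      then show ?thesis using dep[OF cf] v(3)[OF cf] g'P[OF cf] ii by auto
    next
      case False
      then have jP: "j \<in> P" using j by auto
      then have h: "fr i' \<subseteq> P" "g j \<in> V.span (g ` fr i')" using dp i' j jf by auto
      then have cf: "c \<notin> fr i'" using c by auto
      have "g' j = g j" using False unfolding g'_def by simp
      then show ?thesis using h g'P[OF cf] by auto
    qed
  qed
  have A3': "\<forall>I. I \<subseteq> insert c P \<longrightarrow> adm (\<lambda>_. l) I \<longrightarrow> card I \<le> k \<longrightarrow> indep g' I"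
    using A3 by blast
  have S0P': "S0 \<subseteq> insert c P" using S0P by blast
  have "Inv (insert c P) g'" unfolding Inv_def by (intro conjI A1 A2 A3' A4 S0P')
  then show ?thesis unfolding g'_def by blast
qed

lemma Inv_init: "\<exists>g :: nat \<Rightarrow> nat \<Rightarrow> 'a::{field,finite}. Inv S0 g"
proof -
  obtain h where h: "bij_betw h S0 {0..<k}" using ex_bij_betw_finite_nat[OF finite_S0] S0(2) by auto
  define g where "g j = (ee (h j) :: nat \<Rightarrow> 'a)" for j
  have injg: "inj_on g S0"
  proof (rule inj_onI)
    fix x y assume xy: "x \<in> S0" "y \<in> S0" "g x = g y"
    then have "h x = h y" using ee_inj unfolding g_def by (auto dest: injD)
    then show "x = y" using h xy unfolding bij_betw_def by (auto dest: inj_onD)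
  qed
  have img: "g ` S0 = ee ` {..<k}"
  proof -
    have "g ` S0 = ee ` (h ` S0)" unfolding g_def by auto
    also have "h ` S0 = {..<k}" using h unfolding bij_betw_def by auto
    finally show ?thesis .
  qed
  have A2: "\<forall>j\<in>S0. g j \<in> FS {..<k}"
  proof
    fix j assume "j \<in> S0"
    then have "h j < k" using h unfolding bij_betw_def by auto
    then show "g j \<in> FS {..<k}" unfolding g_def FS_def ee_def by auto
  qed
  have A3: "\<forall>I. I \<subseteq> S0 \<longrightarrow> adm (\<lambda>_. l) I \<longrightarrow> card I \<le> k \<longrightarrow> indep g I"
  proof (intro allI impI)
    fix I assume I: "I \<subseteq> S0"
    have "g ` I \<subseteq> ee ` {..<k}" using I img by blast
    then have "V.independent (g ` I)" by (rule V.independent_mono[OF ee_indep])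
    moreover have "inj_on g I" using inj_on_subset[OF injg I] .
    ultimately show "indep g I" unfolding indep_def by simp
  qed
  have A4: "\<forall>i\<in>{1..m}. \<forall>j\<in>S0 \<inter> J i. j \<notin> fr i \<longrightarrow> fr i \<subseteq> S0 \<and> g j \<in> V.span (g ` fr i)"
  proof (intro ballI impI)
    fix i j assume i: "i \<in> {1..m}" and j: "j \<in> S0 \<inter> J i" and jf: "j \<notin> fr i"
    have "j \<in> Free \<inter> J i" using j S0(1) by blast
    then have False using Free_J[OF i] jf by blast
    then show "fr i \<subseteq> S0 \<and> g j \<in> V.span (g ` fr i)" by blast
  qed
  have A1: "S0 \<subseteq> {1..n}" using S0(1) Free_sub by blast
  have "Inv S0 g" unfolding Inv_def by (intro conjI A1 A2 A3 A4 order_refl)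
  then show ?thesis by blast
qed

lemma phase:
  fixes g0 :: "nat \<Rightarrow> nat \<Rightarrow> 'a::{field,finite}"
  assumes fin: "finite F" and inv: "Inv P0 g0"
    and step: "\<And>c Q. c \<in> F \<Longrightarrow> Q \<subseteq> F \<Longrightarrow> c \<notin> Q \<Longrightarrow> \<exists>i\<in>{1..m}. c \<in> J i \<and> c \<notin> P0 \<union> Q \<and>
         (c \<notin> fr i \<longrightarrow> fr i \<subseteq> P0 \<union> Q) \<and>
         card {T. T \<subseteq> P0 \<union> Q \<and> card T = k - 1 \<and> adm (capi i) T} < card (UNIV::'a set)"
  shows "\<exists>g :: nat \<Rightarrow> nat \<Rightarrow> 'a. Inv (P0 \<union> F) g"
  using fin order_refl[of F]
proof (induction F rule: finite_subset_induct')
  case empty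
  then show ?case using inv by auto
next
  case (insert c Q)
  then obtain g :: "nat \<Rightarrow> nat \<Rightarrow> 'a" where g: "Inv (P0 \<union> Q) g" by blast
  obtain i where i: "i \<in> {1..m}" "c \<in> J i" "c \<notin> P0 \<union> Q" "c \<notin> fr i \<longrightarrow> fr i \<subseteq> P0 \<union> Q"
    "card {T. T \<subseteq> P0 \<union> Q \<and> card T = k - 1 \<and> adm (capi i) T} < card (UNIV::'a set)"
    using step[OF insert(2,3,4)] by blast
  obtain v where "Inv (insert c (P0 \<union> Q)) (g(c := v))"
    using extend[OF g i(1,2,3)] i(4,5) by blast
  then show ?case by auto
qed

lemma Inv_all:
  assumes hq: "card Fstar < card (UNIV::'a::{field,finite} set)"
  shows "\<exists>g :: nat \<Rightarrow> nat \<Rightarrow> 'a. Inv {1..n} g"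
proof -
  have m1: "m \<in> {1..m}" using m2 by simp
  have cnt: "card {T. T \<subseteq> P \<and> card T = k - 1 \<and> adm (capi i) T} < card (UNIV::'a set)"
    if "i \<in> {1..m}" "c \<in> J i" "P \<subseteq> {1..n} - {c, n}" "i = m \<or> P \<inter> J m \<subseteq> fr m" for i c P
    using count_le[OF that] hq by linarith
  have finFree: "finite Free" using Free_sub finite_subset by blast
  obtain g0 :: "nat \<Rightarrow> nat \<Rightarrow> 'a" where g0: "Inv S0 g0" using Inv_init by blast
  have "\<exists>g :: nat \<Rightarrow> nat \<Rightarrow> 'a. Inv (S0 \<union> (Free - S0)) g"
  proof (rule phase[OF _ g0])
    show "finite (Free - S0)" using finFree by simp
    fix c Q assume c: "c \<in> Free - S0" and Q: "Q \<subseteq> Free - S0" "c \<notin> Q"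
    obtain i where i: "i \<in> {1..m}" "c \<in> fr i" using c unfolding Free_def by blast
    have cJ: "c \<in> J i" using fr_sub[of i] i by auto
    have P: "S0 \<union> Q \<subseteq> {1..n} - {c, n}" using S0(1) Q c Free_sub n_notin_Free by blast
    have "S0 \<union> Q \<subseteq> Free" using S0(1) Q by blast
    then have "(S0 \<union> Q) \<inter> J m \<subseteq> fr m" using Free_J[OF m1] by blast
    then show "\<exists>i\<in>{1..m}. c \<in> J i \<and> c \<notin> S0 \<union> Q \<and> (c \<notin> fr i \<longrightarrow> fr i \<subseteq> S0 \<union> Q) \<and>
         card {T. T \<subseteq> S0 \<union> Q \<and> card T = k - 1 \<and> adm (capi i) T} < card (UNIV::'a set)"
      using cnt[OF i(1) cJ P] i cJ c Q by blast
  qed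
  moreover have "S0 \<union> (Free - S0) = Free" using S0(1) by blast
  ultimately obtain g1 :: "nat \<Rightarrow> nat \<Rightarrow> 'a" where g1: "Inv Free g1" by auto
  define F2 where "F2 = {j \<in> {1..n}. j \<notin> Free \<and> j \<notin> J m}"
  have "\<exists>g :: nat \<Rightarrow> nat \<Rightarrow> 'a. Inv (Free \<union> F2) g"
  proof (rule phase[OF _ g1])
    show "finite F2" unfolding F2_def by simp
    fix c Q assume c: "c \<in> F2" and Q: "Q \<subseteq> F2" "c \<notin> Q"
    obtain i where i: "i \<in> {1..m}" "c \<in> J i" using c blk_of unfolding F2_def by blast
    have cf: "c \<notin> fr i" using c i Free_J unfolding F2_def by blast
    have frF: "fr i \<subseteq> Free \<union> Q" using Free_J[OF i(1)] by blast
    have nF2: "n \<notin> F2" using n_in_Jm unfolding F2_def by blast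
    have P: "Free \<union> Q \<subseteq> {1..n} - {c, n}" using Free_sub Q c n_notin_Free nF2 unfolding F2_def by blast
    have "Q \<inter> J m = {}" using Q unfolding F2_def by blast
    then have "(Free \<union> Q) \<inter> J m \<subseteq> fr m" using Free_J[OF m1] by blast
    moreover have "c \<notin> Free \<union> Q" using c Q unfolding F2_def by blast
    ultimately show "\<exists>i\<in>{1..m}. c \<in> J i \<and> c \<notin> Free \<union> Q \<and> (c \<notin> fr i \<longrightarrow> fr i \<subseteq> Free \<union> Q) \<and>
         card {T. T \<subseteq> Free \<union> Q \<and> card T = k - 1 \<and> adm (capi i) T} < card (UNIV::'a set)"
      using cnt[OF i P] i frF by blast
  qed
  then obtain g2 :: "nat \<Rightarrow> nat \<Rightarrow> 'a" where g2: "Inv (Free \<union> F2) g2" by auto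
  define F3 where "F3 = J m - fr m - {n}"
  have "\<exists>g :: nat \<Rightarrow> nat \<Rightarrow> 'a. Inv ((Free \<union> F2) \<union> F3) g"
  proof (rule phase[OF _ g2])
    show "finite F3" unfolding F3_def by simp
    fix c Q assume c: "c \<in> F3" and Q: "Q \<subseteq> F3" "c \<notin> Q"
    have cJ: "c \<in> J m" using c unfolding F3_def by blast
    have cn: "c \<notin> Free \<union> F2" using c Free_J[OF m1] unfolding F3_def F2_def by blast
    have frF: "fr m \<subseteq> Free \<union> F2 \<union> Q" using Free_J[OF m1] by blast
    have P: "Free \<union> F2 \<union> Q \<subseteq> {1..n} - {c, n}"
      using Free_sub Q c cn n_notin_Free J_sub[OF m1] n_in_Jm unfolding F2_def F3_def by blast
    show "\<exists>i\<in>{1..m}. c \<in> J i \<and> c \<notin> Free \<union> F2 \<union> Q \<and> (c \<notin> fr i \<longrightarrow> fr i \<subseteq> Free \<union> F2 \<union> Q) \<and>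
         card {T. T \<subseteq> Free \<union> F2 \<union> Q \<and> card T = k - 1 \<and> adm (capi i) T} < card (UNIV::'a set)"
      using cnt[OF m1 cJ P] m1 cJ cn Q frF by blast
  qed
  then obtain g3 :: "nat \<Rightarrow> nat \<Rightarrow> 'a" where g3: "Inv (Free \<union> F2 \<union> F3) g3" by auto
  have nP: "n \<notin> Free \<union> F2 \<union> F3" using n_notin_Free n_in_Jm unfolding F2_def F3_def by blast
  have frm: "fr m \<subseteq> Free \<union> F2 \<union> F3" using Free_J[OF m1] by blast
  have P: "Free \<union> F2 \<union> F3 \<subseteq> {1..n} - {n, n}" using Free_sub nP J_sub[OF m1] unfolding F2_def F3_def by blast
  obtain v where g4: "Inv (insert n (Free \<union> F2 \<union> F3)) (g3(n := v))"
    using extend[OF g3 m1 n_in_Jm nP] frm cnt[OF m1 n_in_Jm P] by blast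
  have "insert n (Free \<union> F2 \<union> F3) = {1..n}"
  proof
    have "n \<in> {1..n}" using n_pos by simp
    then show "insert n (Free \<union> F2 \<union> F3) \<subseteq> {1..n}" using P by blast
    show "{1..n} \<subseteq> insert n (Free \<union> F2 \<union> F3)"
    proof
      fix j assume j: "j \<in> {1..n}"
      then obtain i where i: "i \<in> {1..m}" "j \<in> J i" using blk_of by blast
      show "j \<in> insert n (Free \<union> F2 \<union> F3)"
      proof (cases "i = m")
        case True
        show ?thesis
        proof (cases "j \<in> fr m")
          case True
          then have "j \<in> Free" unfolding Free_def using m1 by blast
          then show ?thesis by blast
        next
          case False
          then have "j = n \<or> j \<in> F3" using i True unfolding F3_def by blast
          then show ?thesis by blast
        qed
      next
        case False
        then have "j \<notin> J m" using J_disj'[OF i(1) m1, of j] i by blast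
        then show ?thesis using j unfolding F2_def by blast
      qed
    qed
  qed
  then show ?thesis using g4 by auto
qed

definition dotp :: "(nat \<Rightarrow> 'a::field) \<Rightarrow> (nat \<Rightarrow> 'a) \<Rightarrow> 'a" where
  "dotp u v = (\<Sum>i<k. u i * v i)"

definition Phi :: "(nat \<Rightarrow> nat \<Rightarrow> 'a::field) \<Rightarrow> nat set \<Rightarrow> (nat \<Rightarrow> 'a) \<Rightarrow> (nat \<Rightarrow> 'a)" where
  "Phi g X u = (\<lambda>j. if j \<in> X then dotp u (g j) else 0)"

lemma dotp_add1: "dotp (u + u') v = dotp u v + dotp u' v"
  unfolding dotp_def by (simp add: distrib_right sum.distrib)
lemma dotp_sc1: "dotp (sc a u) v = a * dotp u v"
  unfolding dotp_def by (simp add: sc_apply sum_distrib_left mult.assoc)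
lemma dotp_diff1: "dotp (u - u') v = dotp u v - dotp u' v"
  unfolding dotp_def by (simp add: left_diff_distrib sum_subtractf)
lemma dotp_add2: "dotp u (v + v') = dotp u v + dotp u v'"
  unfolding dotp_def by (simp add: distrib_left sum.distrib)
lemma dotp_sc2: "dotp u (sc a v) = a * dotp u v"
  unfolding dotp_def by (simp add: sc_apply sum_distrib_left mult.left_commute)
lemma dotp_ee: "t < k \<Longrightarrow> dotp u (ee t) = u t"
proof -
  assume t: "t < k"
  have "dotp u (ee t) = (\<Sum>i<k. if i = t then u i else 0)"
    unfolding dotp_def by (rule sum.cong) (auto simp: ee_def)
  also have "\<dots> = u t" using t by simp
  finally show ?thesis .
qed

lemma dotp_0: "dotp u 0 = 0" by (simp add: dotp_def)

lemma subspace_ker: "V.subspace {v. dotp (u :: nat \<Rightarrow> 'a::field) v = 0}"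
  unfolding V.subspace_def by (auto simp: dotp_add2 dotp_sc2 dotp_0)

lemma Phi_add: "Phi g X (u + u') = Phi g X u + Phi g X u'"
  unfolding Phi_def by (auto simp: fun_eq_iff dotp_add1)
lemma Phi_sc: "Phi g X (sc a u) = sc a (Phi g X u)"
  unfolding Phi_def by (auto simp: fun_eq_iff dotp_sc1 sc_apply)

lemma subspace_range_Phi: "V.subspace (range (Phi g X))"
proof (rule V.subspaceI)
  have "Phi g X 0 = 0" unfolding Phi_def dotp_def by (auto simp: fun_eq_iff)
  then show "0 \<in> range (Phi g X)" by (metis rangeI)
  fix x y assume "x \<in> range (Phi g X)" "y \<in> range (Phi g X)"
  then obtain u u' where "x = Phi g X u" "y = Phi g X u'" by auto
  then show "x + y \<in> range (Phi g X)" using Phi_add by (metis rangeI)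
next
  fix a x assume "x \<in> range (Phi g X)"
  then obtain u where "x = Phi g X u" by auto
  then show "sc a x \<in> range (Phi g X)" using Phi_sc by (metis rangeI)
qed

lemma range_Phi_FS: "range (Phi g X) \<subseteq> FS X"
  unfolding Phi_def FS_def by auto

lemma rho_Phi: "Z \<subseteq> S \<Longrightarrow> rho Z (Phi g S u) = Phi g Z u"
  unfolding rho_def Phi_def by (auto simp: fun_eq_iff)

definition trunc :: "(nat \<Rightarrow> 'a::zero) \<Rightarrow> (nat \<Rightarrow> 'a)" where
  "trunc u = (\<lambda>i. if i < k then u i else 0)"

lemma Phi_trunc: "Phi g X (trunc u) = Phi g X u"
  unfolding Phi_def dotp_def trunc_def by (auto simp: fun_eq_iff)

lemma trunc_FS: "trunc u \<in> FS {..<k}" unfolding trunc_def FS_def by auto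

lemma range_Phi_trunc: "range (Phi g X) = Phi g X ` FS {..<k}"
proof
  show "range (Phi g X) \<subseteq> Phi g X ` FS {..<k}"
    using Phi_trunc trunc_FS by (metis image_eqI image_subsetI rangeE)
qed auto

context
  fixes g :: "nat \<Rightarrow> nat \<Rightarrow> 'a::{field,finite}"
  assumes invg: "Inv {1..n} g"
begin

lemma g_FS: "j \<in> {1..n} \<Longrightarrow> g j \<in> FS {..<k}"
  using invg unfolding Inv_def by blast

lemma g_ind: "I \<subseteq> {1..n} \<Longrightarrow> adm (\<lambda>_. l) I \<Longrightarrow> card I \<le> k \<Longrightarrow> indep g I"
  using invg unfolding Inv_def by blast

lemma g_dep: "i \<in> {1..m} \<Longrightarrow> j \<in> J i \<Longrightarrow> g j \<in> V.span (g ` fr i)"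
proof -
  assume i: "i \<in> {1..m}" and j: "j \<in> J i"
  show ?thesis
  proof (cases "j \<in> fr i")
    case True then show ?thesis by (simp add: V.span_base)
  next
    case False
    have "j \<in> {1..n} \<inter> J i" using j J_sub[OF i] by blast
    then show ?thesis using invg i False unfolding Inv_def by blast
  qed
qed

lemma Phi_bij:
  assumes X: "adm (\<lambda>_. l) X" "card X = k"
  shows "inj_on (Phi g X) (FS {..<k})" "Phi g X ` FS {..<k} = FS X"
proof -
  have Xn: "X \<subseteq> {1..n}" using X unfolding adm_def by blast
  have finX: "finite X" using adm_finite[OF X(1)] .
  have iX: "indep g X" using g_ind[OF Xn X(1)] X(2) by simp
  have gX: "g ` X \<subseteq> FS {..<k}" using g_FS Xn by blast
  have sp1: "V.span (g ` X) \<subseteq> FS {..<k}" by (rule V.span_minimal[OF gX subspace_FS])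
  have "card (V.span (g ` X)) = card (UNIV::'a set) ^ k"
    using card_span[of "g ` X"] iX finX X(2) card_image unfolding indep_def by fastforce
  moreover have "card (FS {..<k} :: (nat \<Rightarrow> 'a) set) = card (UNIV::'a set) ^ k" by (simp add: card_FS)
  ultimately have sp: "V.span (g ` X) = FS {..<k}"
    using card_subset_eq[OF finite_FS sp1] by simp
  show inj: "inj_on (Phi g X) (FS {..<k})"
  proof (rule inj_onI)
    fix u u' :: "nat \<Rightarrow> 'a" assume u: "u \<in> FS {..<k}" "u' \<in> FS {..<k}" and e: "Phi g X u = Phi g X u'"
    define w where "w = u - u'"
    have "g ` X \<subseteq> {v. dotp w v = 0}"
    proof
      fix v assume "v \<in> g ` X"
      then obtain j where j: "j \<in> X" "v = g j" by auto
      have "dotp u (g j) = dotp u' (g j)" using fun_cong[OF e, of j] j unfolding Phi_def by simp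
      then show "v \<in> {v. dotp w v = 0}" using j unfolding w_def by (simp add: dotp_diff1)
    qed
    then have "V.span (g ` X) \<subseteq> {v. dotp w v = 0}" by (rule V.span_minimal[OF _ subspace_ker])
    then have K: "FS {..<k} \<subseteq> {v. dotp w v = 0}" using sp by simp
    have "w t = 0" for t
    proof (cases "t < k")
      case True
      have "ee t \<in> FS {..<k}" using True by (auto simp: FS_def ee_def)
      then show ?thesis using K dotp_ee[OF True, of w] by auto
    next
      case False then show ?thesis using u unfolding w_def FS_def by auto
    qed
    then show "u = u'" unfolding w_def by (auto simp: fun_eq_iff)
  qed
  have sub: "Phi g X ` FS {..<k} \<subseteq> FS X" using range_Phi_FS by blast
  have "card (Phi g X ` FS {..<k}) = card (FS X :: (nat \<Rightarrow> 'a) set)"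
    using card_image[OF inj] X(2) finX by (simp add: card_FS)
  then show "Phi g X ` FS {..<k} = FS X" using card_subset_eq[OF finite_FS[OF finX] sub] by simp
qed

lemma Phi_surj:
  assumes Z: "adm (\<lambda>_. l) Z" "card Z \<le> k"
  shows "range (Phi g Z) = FS Z"
proof
  show "range (Phi g Z) \<subseteq> FS Z" by (rule range_Phi_FS)
  obtain X where X: "Z \<subseteq> X" "adm (\<lambda>_. l) X" "card X = card S0"
    using augment[OF Z(1) adm_S0] Z(2) S0(2) by auto
  have cX: "card X = k" using X(3) S0(2) by simp
  show "FS Z \<subseteq> range (Phi g Z)"
  proof
    fix v :: "nat \<Rightarrow> 'a" assume v: "v \<in> FS Z"
    then have "v \<in> FS X" using X(1) unfolding FS_def by blast
    then obtain u where u: "Phi g X u = v" using Phi_bij(2)[OF X(2) cX] by (metis imageE)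
    have "Phi g Z u = rho Z v" using rho_Phi[OF X(1), of g u] u by simp
    also have "rho Z v = v" using v unfolding rho_def FS_def by (auto simp: fun_eq_iff)
    finally show "v \<in> range (Phi g Z)" by (metis rangeI)
  qed
qed

lemma card_range_big:
  assumes S: "adm (\<lambda>_. l) S" "k \<le> card S"
  shows "card (range (Phi g S)) = card (UNIV::'a set) ^ k"
proof -
  obtain X where X: "X \<subseteq> S" "card X = k" using S(2) obtain_subset_with_card_n by metis
  have aX: "adm (\<lambda>_. l) X" using adm_mono[OF S(1) X(1)] .
  have "inj_on (Phi g S) (FS {..<k})"
  proof (rule inj_onI)
    fix u u' assume u: "u \<in> FS {..<k}" "u' \<in> FS {..<k}" and e: "Phi g S u = Phi g S u'"
    have "Phi g X u = Phi g X u'" using rho_Phi[OF X(1), of g] e by metis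
    then show "u = u'" using inj_onD[OF Phi_bij(1)[OF aX X(2)] _ u] by simp
  qed
  then show ?thesis unfolding range_Phi_trunc by (simp add: card_image card_FS)
qed

lemma block_card:
  assumes i: "i \<in> {1..m}"
  shows "card (range (Phi g (J i))) = card (UNIV::'a set) ^ l"
proof -
  have i1: "1 \<le> i" using i by simp
  have afr: "adm (\<lambda>_. l) (fr i)"
    unfolding adm_def
  proof (intro conjI ballI)
    show "fr i \<subseteq> {1..n}" using fr_sub[OF i1] J_sub[OF i] by blast
    fix i' assume "i' \<in> {1..m}"
    show "card (fr i \<inter> J i') \<le> l" using card_mono[of "fr i" "fr i \<inter> J i'"] card_fr
      by (metis card_mono finite_fr inf_le1)
  qed
  have sur: "rho (fr i) ` range (Phi g (J i)) = FS (fr i)"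
  proof -
    have "rho (fr i) ` range (Phi g (J i)) = range (Phi g (fr i))"
      using rho_Phi[OF fr_sub[OF i1], of g] by (auto simp: image_iff)
    also have "\<dots> = FS (fr i)" using Phi_surj[OF afr] card_fr lk by simp
    finally show ?thesis .
  qed
  have inj: "inj_on (rho (fr i)) (range (Phi g (J i)))"
  proof (rule inj_onI)
    fix x y assume "x \<in> range (Phi g (J i))" "y \<in> range (Phi g (J i))" and e: "rho (fr i) x = rho (fr i) y"
    then obtain u u' where xy: "x = Phi g (J i) u" "y = Phi g (J i) u'" by auto
    define w where "w = u - u'"
    have e2: "Phi g (fr i) u = Phi g (fr i) u'" using e xy rho_Phi[OF fr_sub[OF i1]] by metis
    have "dotp w (g j) = 0" if "j \<in> fr i" for j
      using fun_cong[OF e2, of j] that unfolding w_def Phi_def by (simp add: dotp_diff1)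
    then have "g ` fr i \<subseteq> {v. dotp w v = 0}" by blast
    then have K: "V.span (g ` fr i) \<subseteq> {v. dotp w v = 0}" by (rule V.span_minimal[OF _ subspace_ker])
    have "dotp u (g j) = dotp u' (g j)" if "j \<in> J i" for j
      using K g_dep[OF i that] unfolding w_def by (auto simp: dotp_diff1)
    then show "x = y" unfolding xy Phi_def by (auto simp: fun_eq_iff)
  qed
  have "card (range (Phi g (J i))) = card (FS (fr i) :: (nat \<Rightarrow> 'a) set)"
    using card_image[OF inj] sur by simp
  then show ?thesis by (simp add: card_FS card_fr)
qed

lemma card_range_gen:
  assumes X: "X \<subseteq> S" "adm (\<lambda>_. l) X" "card X = k"
  shows "card (range (Phi g S)) = card (UNIV::'a set) ^ k"
proof -
  have "inj_on (Phi g S) (FS {..<k})"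
  proof (rule inj_onI)
    fix u u' assume u: "u \<in> FS {..<k}" "u' \<in> FS {..<k}" and e: "Phi g S u = Phi g S u'"
    have "Phi g X u = Phi g X u'" using rho_Phi[OF X(1), of g] e by metis
    then show "u = u'" using inj_onD[OF Phi_bij(1)[OF X(2,3)] _ u] by simp
  qed
  then show ?thesis unfolding range_Phi_trunc by (simp add: card_image card_FS)
qed

lemma restr_Phi: "T \<subseteq> {1..n} \<Longrightarrow> restr_code T (range (Phi g {1..n})) = range (Phi g T)"
proof -
  assume T: "T \<subseteq> {1..n}"
  have eq: "(\<lambda>c. (\<lambda>j. if j \<in> T then c j else 0)) = rho T" unfolding rho_def by (simp add: fun_eq_iff)
  have "restr_code T (range (Phi g {1..n})) = rho T ` range (Phi g {1..n})"
    unfolding restr_code_def eq ..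
  also have "\<dots> = range (Phi g T)" using rho_Phi[OF T, of g] by (auto simp: image_iff)
  finally show ?thesis .
qed

lemma adm_small: "Z \<subseteq> {1..n} \<Longrightarrow> card Z \<le> l \<Longrightarrow> adm (\<lambda>_. l) Z"
  unfolding adm_def
proof (intro conjI ballI)
  fix i assume "Z \<subseteq> {1..n}" "card Z \<le> l"
  moreover have "finite Z" using \<open>Z \<subseteq> {1..n}\<close> finite_subset by blast
  ultimately show "card (Z \<inter> J i) \<le> l" using card_mono[of Z "Z \<inter> J i"] by auto
qed

lemma PMDS: "is_PMDS_gen m l r k (\<lambda>i j. g j i)"
proof -
  have nn: "(\<Sum>i\<in>{1..m}. r i + l) = n" unfolding n_def ns_def by simp
  have nsf: "(\<lambda>i. r i + l) = ns" by (simp add: ns_def fun_eq_iff)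
  have blkJ: "blk (\<lambda>i. r i + l) i = J i" for i unfolding nsf J_def ..
  have gc: "gen_code n k (\<lambda>i j. g j i) = range (Phi g {1..n})"
    unfolding gen_code_def Phi_def dotp_def by auto
  have k1: "1 \<le> k" using lk l1 by simp
  have S0n: "S0 \<subseteq> {1..n}" using S0(1) Free_sub by blast
  have cardC: "card (range (Phi g {1..n})) = card (UNIV::'a set) ^ k"
    by (rule card_range_gen[OF S0n adm_S0 S0(2)])
  have finC: "finite (range (Phi g {1..n}))"
    using finite_subset[OF range_Phi_FS finite_FS[of "{1..n}"]] by simp
  have dimC: "code_dim (range (Phi g {1..n})) = k"
    unfolding code_dim_def by (rule card_dim[OF subspace_range_Phi cardC finC])
  have blocks: "is_MDS (J i) l (restr_code (J i) (range (Phi g {1..n})))" if i: "i \<in> {1..m}" for i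
  proof -
    have i1: "1 \<le> i" using i by simp
    have "restr_code (J i) (range (Phi g {1..n})) = range (Phi g (J i))"
      by (rule restr_Phi[OF J_sub[OF i]])
    moreover have "is_MDS (J i) l (range (Phi g (J i)))"
    proof (rule MDS_crit)
      show "finite (J i)" by simp
      show "range (Phi g (J i)) \<subseteq> FS (J i)" by (rule range_Phi_FS)
      show "V.subspace (range (Phi g (J i)))" by (rule subspace_range_Phi)
      show "card (range (Phi g (J i))) = card (UNIV::'a set) ^ l" by (rule block_card[OF i])
      show "1 \<le> l" by (rule l1)
      show "l \<le> card (J i)" using card_J[OF i1] by (simp add: ns_def)
      fix Z assume Z: "Z \<subseteq> J i" "card Z = l"
      have "rho Z ` range (Phi g (J i)) = range (Phi g Z)" using rho_Phi[OF Z(1), of g] by (auto simp: image_iff)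
      also have "\<dots> = FS Z"
        using Phi_surj[OF adm_small] Z J_sub[OF i] lk by auto
      finally show "rho Z ` range (Phi g (J i)) = FS Z" .
    qed
    ultimately show ?thesis by simp
  qed
  have punct: "is_MDS ({1..n} - E) k (restr_code ({1..n} - E) (range (Phi g {1..n})))"
    if E: "E \<subseteq> {1..n}" "\<forall>i\<in>{1..m}. card (E \<inter> J i) = r i" for E
  proof -
    define S where "S = {1..n} - E"
    have Sn: "S \<subseteq> {1..n}" unfolding S_def by blast
    have SJ: "card (S \<inter> J i) = l" if i: "i \<in> {1..m}" for i
    proof -
      have "S \<inter> J i = J i - (E \<inter> J i)" unfolding S_def using J_sub[OF i] by blast
      then have "card (S \<inter> J i) = card (J i) - card (E \<inter> J i)" by (simp add: card_Diff_subset)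
      then show ?thesis using card_J[of i] i E(2) by (simp add: ns_def)
    qed
    have aS: "adm (\<lambda>_. l) S" unfolding adm_def using Sn SJ by simp
    have cS: "card S = m * l" using card_split[OF Sn] SJ by simp
    obtain X where X: "X \<subseteq> S" "card X = k" using cS kml obtain_subset_with_card_n
      by (metis less_imp_le_nat)
    have "restr_code S (range (Phi g {1..n})) = range (Phi g S)" by (rule restr_Phi[OF Sn])
    moreover have "is_MDS S k (range (Phi g S))"
    proof (rule MDS_crit)
      show "finite S" using Sn finite_subset by blast
      show "range (Phi g S) \<subseteq> FS S" by (rule range_Phi_FS)
      show "V.subspace (range (Phi g S))" by (rule subspace_range_Phi)
      show "card (range (Phi g S)) = card (UNIV::'a set) ^ k"
        by (rule card_range_gen[OF X(1) adm_mono[OF aS X(1)] X(2)])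
      show "1 \<le> k" by (rule k1)
      show "k \<le> card S" using cS kml by simp
      fix Z assume Z: "Z \<subseteq> S" "card Z = k"
      have "rho Z ` range (Phi g S) = range (Phi g Z)" using rho_Phi[OF Z(1), of g] by (auto simp: image_iff)
      also have "\<dots> = FS Z" using Phi_surj[OF adm_mono[OF aS Z(1)]] Z(2) by simp
      finally show "rho Z ` range (Phi g S) = FS Z" .
    qed
    ultimately show ?thesis unfolding S_def by simp
  qed
  have kn: "k < n" using kml ml_le_n by simp
  show ?thesis unfolding is_PMDS_gen_def Let_def nn blkJ gc
    using kn dimC blocks punct by blast
qed

end

end

theorem corollary24:
  fixes m l k :: nat and r :: "nat \<Rightarrow> nat"
  assumes "m \<ge> 2" and "l \<ge> 1" and "\<forall>i\<in>{1..m}. r i \<ge> 1"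
    and "l \<le> k" and "k < m * l"
    and "card (UNIV :: 'a set) >
           M (k - 1) m (\<lambda>i. if i = m then l + r i - 1 else l + r i)
                       (\<lambda>i. if i = m then l - 1 else l)"
  shows "\<exists>G :: nat \<Rightarrow> nat \<Rightarrow> 'a::{field,finite}. is_PMDS_gen m l r k G"
proof -
  interpret P: pm m l k r using assms(1-5) by unfold_locales
  have "card P.Fstar < card (UNIV :: 'a set)"
    using assms(6) P.Mstar_eq unfolding P.ns'_def by simp
  then obtain g :: "nat \<Rightarrow> nat \<Rightarrow> 'a" where g: "P.Inv {1..P.n} g" using P.Inv_all by blast
  show ?thesis using P.PMDS[OF g] by blast
qed

end
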